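(* Assume (A2), (A3), (B1) and (B2). Then any measurable choice $x^\star(b_n)$ of an optimal solution of $(\mathrm{P}_{b_n})$ satisfies $$r_n\big(x^\star(b_n)-x^\star(b)\big)\xrightarrow{D}\sum_{k=1}^K\mathbb{1}\Big\{G\in H_k\setminus\bigcup_{j<k}H_j\Big\}\,x(I_k,G)\in\mathbb{R}^d,$$ with $H_k\subseteq\mathbb{R}^m$ the closed convex cones defined below (no joint convergence assumption on any weights is needed). If moreover $G$ is absolutely continuous, the indicators may be replaced by $\mathbb{1}\{G\in H_k\}$.
   Context: Setting: $A\in\mathbb{R}^{m\times d}$ of full rank $m\le d$, $b\in\mathbb{R}^m$, $c\in\mathbb{R}^d$. $(\mathrm{P}_\beta)$: $\min c^Tx$ s.t. $Ax=\beta,x\ge0$; $(\mathrm{D}_\beta)$: $\max\beta^T\lambda$ s.t. $A^T\lambda\le c$. A basis is $I\subseteq[d]$ with $|I|=m$, $A_I$ invertible; $x(I,v)\in\mathbb{R}^d$ has coordinates $(A_I)^{-1}v$ on $I$ and $0$ elsewhere; $\lambda(I)=(A_I)^{-T}c_I$; $I$ is dual feasible if $A^T\lambda(I)\le c$. Let $I_1,\dots,I_N$ enumerate all dual feasible bases with $I_1,\dots,I_K$ exactly those with $x(I_k,b)\ge0$. (A2): $(\mathrm{P}_b)$ has a unique optimal solution $x^\star(b)$. (A3): $\lambda(I_j)\ne\lambda(I_k)$ for $1\le j<k\le K$. Stochastic: $r_n\to\infty$, $m_0\in[m]$, random $b_n\in\mathbb{R}^m$ whose last $m-m_0$ coordinates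 equal those of $b$. (B1): $G_n:=r_n(b_n-b)\xrightarrow{D}G=(G^{m_0},0_{m-m_0})$ with $G^{m_0}$ absolutely continuous on $\mathbb{R}^{m_0}$. (B2): $\mathbb{P}((\mathrm{P}_{b_n})\text{ has an optimal solution})\to1$. Cones: $\mathrm{Pos}=\{i:x^\star_i(b)>0\}$; for $k\le K$ write $I_k=\{i^k_1<\dots<i^k_m\}$, $J_k=\{j\in[m]:i^k_j\notin\mathrm{Pos}\}$, and $H_k=\{v\in\mathbb{R}^m:[(A_{I_k})^{-1}v]_j\ge0\ \forall j\in J_k\}$. *)

theory Defs
  imports "HOL-Probability.Probability"
begin

definition supp_in :: "'d set \<Rightarrow> real^'d \<Rightarrow> bool" where
  "supp_in I x \<longleftrightarrow> (\<forall>i. i \<notin> I \<longrightarrow> x $ i = 0)"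

definition is_basis :: "real^'d^'m \<Rightarrow> 'd set \<Rightarrow> bool" where
  "is_basis A I \<longleftrightarrow> card I = CARD('m) \<and> (\<forall>x. supp_in I x \<and> A *v x = 0 \<longrightarrow> x = 0)"

text \<open>x(I,v): coordinates (A_I)^{-1} v on I and 0 elsewhere.\<close>
definition basic_sol :: "real^'d^'m \<Rightarrow> 'd set \<Rightarrow> real^'m \<Rightarrow> real^'d" where
  "basic_sol A I v = (THE x. supp_in I x \<and> A *v x = v)"

text \<open>lambda(I) = (A_I)^{-T} c_I, i.e. the unique lambda with (A^T lambda)_i = c_i for i in I.\<close>
definition dual_sol :: "real^'d^'m \<Rightarrow> real^'d \<Rightarrow> 'd set \<Rightarrow> real^'m" where
  "dual_sol A c I = (THE l. \<forall>i\<in>I. (transpose A *v l) $ i = c $ i)"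

definition dual_feasible_basis :: "real^'d^'m \<Rightarrow> real^'d \<Rightarrow> 'd set \<Rightarrow> bool" where
  "dual_feasible_basis A c I \<longleftrightarrow> is_basis A I \<and> (\<forall>i. (transpose A *v dual_sol A c I) $ i \<le> c $ i)"

definition lp_optimal :: "real^'d^'m \<Rightarrow> real^'d \<Rightarrow> real^'m \<Rightarrow> real^'d \<Rightarrow> bool" where
  "lp_optimal A c beta x \<longleftrightarrow> (\<forall>i. 0 \<le> x $ i) \<and> A *v x = beta \<and>
     (\<forall>y. (\<forall>i. 0 \<le> y $ i) \<and> A *v y = beta \<longrightarrow> c \<bullet> x \<le> c \<bullet> y)"

text \<open>x*(beta), meaningful when the optimal solution is unique (A2).\<close>
definition lp_xstar :: "real^'d^'m \<Rightarrow> real^'d \<Rightarrow> real^'m \<Rightarrow> real^'d" where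
  "lp_xstar A c beta = (THE x. lp_optimal A c beta x)"

definition Pos :: "real^'d^'m \<Rightarrow> real^'d \<Rightarrow> real^'m \<Rightarrow> 'd set" where
  "Pos A c b = {i. 0 < lp_xstar A c b $ i}"

text \<open>H_k = {v. [(A_{I_k})^{-1} v]_j >= 0 for all j in J_k}; since the j-th coordinate of
  (A_I)^{-1} v is the i_j-th coordinate of x(I,v), this is the set of v with
  x(I,v)_i >= 0 for all i in I \ Pos.\<close>
definition Hcone :: "real^'d^'m \<Rightarrow> real^'d \<Rightarrow> real^'m \<Rightarrow> 'd set \<Rightarrow> (real^'m) set" where
  "Hcone A c b I = {v. \<forall>i\<in>I - Pos A c b. 0 \<le> basic_sol A I v $ i}"

text \<open>Limit map: sum_k 1{v in H_k \ U_{j<k} H_j} x(I_k, v) (list Is is 0-indexed).\<close>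
definition limit_map :: "real^'d^'m \<Rightarrow> real^'d \<Rightarrow> real^'m \<Rightarrow> 'd set list \<Rightarrow> real^'m \<Rightarrow> real^'d" where
  "limit_map A c b Is v = (\<Sum>k<length Is.
      indicator (Hcone A c b (Is ! k) - (\<Union>j<k. Hcone A c b (Is ! j))) v *\<^sub>R basic_sol A (Is ! k) v)"

definition limit_map_simple :: "real^'d^'m \<Rightarrow> real^'d \<Rightarrow> real^'m \<Rightarrow> 'd set list \<Rightarrow> real^'m \<Rightarrow> real^'d" where
  "limit_map_simple A c b Is v = (\<Sum>k<length Is.
      indicator (Hcone A c b (Is ! k)) v *\<^sub>R basic_sol A (Is ! k) v)"

definition conv_distr :: "(nat \<Rightarrow> 'a::real_normed_vector measure) \<Rightarrow> 'a measure \<Rightarrow> bool" where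
  "conv_distr \<mu>s \<mu> \<longleftrightarrow> (\<forall>f :: 'a \<Rightarrow> real. continuous_on UNIV f \<and> bounded (range f) \<longrightarrow>
      (\<lambda>n. integral\<^sup>L (\<mu>s n) f) \<longlonglongrightarrow> integral\<^sup>L \<mu> f)"

definition first_coords :: "nat \<Rightarrow> ('m::{finite,linorder}) set" where
  "first_coords m0 = {i. card {j. j < i} < m0}"

end

theory Submission
  imports Defs
begin


definition suppsp :: "'d set \<Rightarrow> (real^'d) set" where
  "suppsp J = {x. supp_in J x}"

lemma mv_col: "(A::real^'d^'m) *v x = (\<Sum>i\<in>UNIV. x$i *\<^sub>R column i A)"
  by (simp add: matrix_mult_sum scalar_mult_eq_scaleR)

lemma tr_col: "(transpose (A::real^'d^'m) *v l) $ i = column i A \<bullet> l"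
  by (simp add: matrix_vector_mult_def transpose_def column_def inner_vec_def mult.commute)

lemma dot_mv: "l \<bullet> ((A::real^'d^'m) *v x) = (\<Sum>i\<in>UNIV. x$i * (column i A \<bullet> l))"
  by (simp add: mv_col inner_sum_right inner_commute)

lemma mv_neg: "(A::real^'d^'m) *v (- u) = - (A *v u)"
  by (metis matrix_vector_mult_diff_distrib diff_0 matrix_vector_mult_0_right)

lemma subspace_suppsp: "subspace (suppsp J)"
  by (auto simp: subspace_def suppsp_def supp_in_def)

lemma dim_suppsp: "dim (suppsp (J::'d::finite set)) = card J"
proof -
  have "suppsp J = {x::real^'d. \<forall>i. i \<notin> J \<longrightarrow> x $ i = 0}"
    by (auto simp: suppsp_def supp_in_def)
  moreover have "vec.dim {x::real^'d. \<forall>i. i \<notin> J \<longrightarrow> x $ i = 0} = dim {x::real^'d. \<forall>i. i \<notin> J \<longrightarrow> x $ i = 0}"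
    by (rule dim_vec_eq)
  moreover have "vec.dim {x::real^'d. \<forall>i. i \<notin> J \<longrightarrow> x $ i = 0} = card J"
    by (rule dim_substandard_cart)
  ultimately show ?thesis by simp
qed

lemma basis_inj:
  fixes A :: "real^'d^'m"
  assumes "is_basis A I"
  shows "inj_on ((*v) A) (suppsp I)"
proof (rule inj_onI)
  fix x y assume xy: "x \<in> suppsp I" "y \<in> suppsp I" "A *v x = A *v y"
  have "supp_in I (x - y)" using xy by (auto simp: suppsp_def supp_in_def)
  moreover have "A *v (x - y) = 0" using xy by (simp add: matrix_vector_mult_diff_distrib)
  ultimately show "x = y" using assms by (auto simp: is_basis_def)
qed

lemma basis_surj:
  fixes A :: "real^'d^'m"
  assumes "is_basis A I"
  shows "(*v) A ` suppsp I = UNIV"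
proof -
  have lin: "linear ((*v) A)" by (simp add: matrix_vector_mul_linear)
  have sp: "span (suppsp I) = suppsp I" by (simp add: subspace_suppsp)
  have "dim ((*v) A ` suppsp I) = dim (suppsp I)"
    using eucl.dim_image_eq[OF lin, of "suppsp I"] basis_inj[OF assms] sp by simp
  also have "\<dots> = CARD('m)" using assms by (simp add: dim_suppsp is_basis_def)
  finally have "dim ((*v) A ` suppsp I) = DIM(real^'m)" by (simp add: DIM_cart)
  then have "span ((*v) A ` suppsp I) = UNIV" by (simp only: eucl.dim_eq_full)
  moreover have "subspace ((*v) A ` suppsp I)"
    using linear_subspace_image[OF lin subspace_suppsp] .
  ultimately show ?thesis by (metis span_eq_iff)
qed

lemma basic_sol_ex:
  fixes A :: "real^'d^'m"
  assumes "is_basis A I"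
  shows "\<exists>!x. supp_in I x \<and> A *v x = v"
proof -
  obtain x where "x \<in> suppsp I" "A *v x = v" using basis_surj[OF assms] by (metis UNIV_I imageE)
  moreover have "\<And>y. supp_in I y \<Longrightarrow> A *v y = v \<Longrightarrow> y = x"
    using basis_inj[OF assms] calculation by (auto simp: suppsp_def inj_on_def)
  ultimately show ?thesis by (auto simp: suppsp_def)
qed

lemma basic_sol:
  fixes A :: "real^'d^'m"
  assumes "is_basis A I"
  shows "supp_in I (basic_sol A I v)" "A *v basic_sol A I v = v"
  using theI'[OF basic_sol_ex[OF assms, of v]] by (auto simp: basic_sol_def)

lemma basic_sol_unique:
  fixes A :: "real^'d^'m"
  assumes "is_basis A I" "supp_in I x" "A *v x = v"
  shows "basic_sol A I v = x"
  using basic_sol_ex[OF assms(1), of v] basic_sol[OF assms(1), of v] assms by blast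

lemma basic_sol_linear:
  fixes A :: "real^'d^'m"
  assumes "is_basis A I"
  shows "linear (basic_sol A I)"
proof (rule linearI)
  fix u v
  show "basic_sol A I (u + v) = basic_sol A I u + basic_sol A I v"
    using basic_sol[OF assms] by (intro basic_sol_unique[OF assms])
      (auto simp: supp_in_def matrix_vector_right_distrib)
next
  fix r u
  show "basic_sol A I (r *\<^sub>R u) = r *\<^sub>R basic_sol A I u"
    using basic_sol[OF assms] by (intro basic_sol_unique[OF assms])
      (auto simp: supp_in_def matrix_vector_mult_scaleR)
qed

lemma cdot_basic:
  fixes A :: "real^'d^'m"
  assumes "is_basis A I" "\<forall>i\<in>I. column i A \<bullet> l = c$i"
  shows "l \<bullet> v = c \<bullet> basic_sol A I v"
proof -
  let ?x = "basic_sol A I v"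
  have "l \<bullet> v = l \<bullet> (A *v ?x)" using basic_sol[OF assms(1)] by simp
  also have "\<dots> = (\<Sum>i\<in>UNIV. ?x$i * (column i A \<bullet> l))" by (rule dot_mv)
  also have "\<dots> = (\<Sum>i\<in>UNIV. c$i * ?x$i)"
    using basic_sol(1)[OF assms(1), of v] assms(2)
    by (intro sum.cong) (auto simp: supp_in_def)
  also have "\<dots> = c \<bullet> ?x" by (simp add: inner_vec_def)
  finally show ?thesis .
qed

lemma dual_sol_ex:
  fixes A :: "real^'d^'m"
  assumes "is_basis A I"
  shows "\<exists>!l. \<forall>i\<in>I. column i A \<bullet> l = c$i"
proof -
  define \<phi> where "\<phi> v = c \<bullet> basic_sol A I v" for v
  have lin: "linear \<phi>" unfolding \<phi>_def
    using basic_sol_linear[OF assms] by (intro linear_compose[unfolded o_def, OF _ bounded_linear.linear[OF bounded_linear_inner_right]])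
  define l :: "real^'m" where "l = (\<chi> k. \<phi> (axis k 1))"
  have "l \<bullet> v = \<phi> v" for v
  proof -
    have "\<phi> v = \<phi> (\<Sum>k\<in>UNIV. v$k *\<^sub>R axis k 1)"
      by (metis (no_types) basis_expansion scalar_mult_eq_scaleR)
    also have "\<dots> = (\<Sum>k\<in>UNIV. v$k * \<phi> (axis k 1))"
      using lin by (simp add: linear_sum linear_scale)
    finally show ?thesis by (simp add: l_def inner_vec_def mult.commute)
  qed
  then have "\<forall>i\<in>I. column i A \<bullet> l = c$i"
  proof (intro ballI)
    fix i assume i: "i \<in> I"
    have "basic_sol A I (column i A) = axis i 1"
      using i by (intro basic_sol_unique[OF assms]) (simp add: supp_in_def axis_def, simp add: matrix_vector_mult_basis)
    then show "column i A \<bullet> l = c$i"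
      using \<open>\<And>v. l \<bullet> v = \<phi> v\<close>[of "column i A"] by (simp add: \<phi>_def inner_commute inner_axis)
  qed
  moreover have "l' = l" if "\<forall>i\<in>I. column i A \<bullet> l' = c$i" for l'
  proof -
    have "l' \<bullet> v = l \<bullet> v" for v
      using cdot_basic[OF assms that] cdot_basic[OF assms calculation] by simp
    then show ?thesis by (metis vector_eq_rdot)
  qed
  ultimately show ?thesis by blast
qed

lemma dual_sol:
  fixes A :: "real^'d^'m"
  assumes "is_basis A I"
  shows "\<forall>i\<in>I. column i A \<bullet> dual_sol A c I = c$i"
proof -
  have "dual_sol A c I = (THE l. \<forall>i\<in>I. column i A \<bullet> l = c$i)" unfolding dual_sol_def tr_col ..
  then show ?thesis using theI'[OF dual_sol_ex[OF assms, of c]] by simp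
qed

lemma dual_sol_unique:
  fixes A :: "real^'d^'m"
  assumes "is_basis A I" "\<forall>i\<in>I. column i A \<bullet> l = c$i"
  shows "dual_sol A c I = l"
  using dual_sol_ex[OF assms(1), of c] dual_sol[OF assms(1), of c] assms(2) by blast

lemma dual_basic:
  fixes A :: "real^'d^'m"
  assumes "is_basis A I"
  shows "c \<bullet> basic_sol A I v = dual_sol A c I \<bullet> v"
  using cdot_basic[OF assms dual_sol[OF assms]] by simp

lemma weak_duality:
  fixes A :: "real^'d^'m"
  assumes "\<forall>i. column i A \<bullet> l \<le> c$i" "\<forall>i. 0 \<le> y$i"
  shows "l \<bullet> (A *v y) \<le> c \<bullet> y"
proof -
  have "l \<bullet> (A *v y) = (\<Sum>i\<in>UNIV. y$i * (column i A \<bullet> l))" by (rule dot_mv)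
  also have "\<dots> \<le> (\<Sum>i\<in>UNIV. c$i * y$i)"
    using assms by (intro sum_mono) (metis mult.commute mult_left_mono)
  finally show ?thesis by (simp add: inner_vec_def)
qed

lemma dfb_char:
  fixes A :: "real^'d^'m"
  shows "dual_feasible_basis A c I \<longleftrightarrow> is_basis A I \<and> (\<forall>i. column i A \<bullet> dual_sol A c I \<le> c$i)"
  unfolding dual_feasible_basis_def tr_col ..

definition supp :: "real^'d \<Rightarrow> 'd set" where "supp x = {i. x$i \<noteq> 0}"

lemma small_t:
  fixes a w :: "'a \<Rightarrow> real"
  assumes "finite S" "\<forall>i\<in>S. 0 < a i"
  shows "\<exists>t>0. \<forall>i\<in>S. t * \<bar>w i\<bar> \<le> a i"
proof -
  define t where "t = Min (insert 1 ((\<lambda>i. a i / (\<bar>w i\<bar> + 1)) ` S))"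
  have "t > 0" unfolding t_def using assms by (subst Min_gr_iff) auto
  moreover have "t * \<bar>w i\<bar> \<le> a i" if i: "i \<in> S" for i
  proof -
    have "t \<le> a i / (\<bar>w i\<bar> + 1)" unfolding t_def using assms i by (intro Min_le) auto
    then have "t * (\<bar>w i\<bar> + 1) \<le> a i" by (simp add: field_simps add_pos_nonneg)
    moreover have "t * (\<bar>w i\<bar> + 1) = t * \<bar>w i\<bar> + t" by (simp add: distrib_left)
    ultimately show ?thesis using \<open>t > 0\<close> by linarith
  qed
  ultimately show ?thesis by blast
qed

lemma indep_opt:
  fixes A :: "real^'d^'m"
  assumes "lp_optimal A c \<beta> y"
  shows "\<exists>x. lp_optimal A c \<beta> x \<and> (\<forall>z. supp_in (supp x) z \<and> A *v z = 0 \<longrightarrow> z = 0)"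
  using assms
proof (induction "card (supp y)" arbitrary: y rule: less_induct)
  case less
  show ?case
  proof (cases "\<forall>z. supp_in (supp y) z \<and> A *v z = 0 \<longrightarrow> z = 0")
    case True then show ?thesis using less.prems by blast
  next
    case False
    then obtain u where u: "supp_in (supp y) u" "A *v u = 0" "u \<noteq> 0" by blast
    have ypos: "0 < y$i" if "i \<in> supp y" for i
      using that less.prems by (auto simp: supp_def lp_optimal_def less_le)
    obtain t where t: "t > 0" "\<forall>i\<in>supp y. t * \<bar>u$i\<bar> \<le> y$i"
      using small_t[of "supp y" "\<lambda>i. y$i" "\<lambda>i. u$i"] ypos by auto
    have feas: "\<forall>i. 0 \<le> (y + s *\<^sub>R u)$i" if "\<bar>s\<bar> \<le> t" for s
    proof
      fix i show "0 \<le> (y + s *\<^sub>R u)$i"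
      proof (cases "i \<in> supp y")
        case True
        have "\<bar>s * u$i\<bar> \<le> t * \<bar>u$i\<bar>" using that by (simp add: abs_mult mult_right_mono)
        then show ?thesis using t True by auto
      next
        case False then show ?thesis using u(1) less.prems by (auto simp: supp_in_def lp_optimal_def)
      qed
    qed
    have Aeq: "A *v (y + s *\<^sub>R u) = \<beta>" for s
      using u(2) less.prems by (simp add: matrix_vector_right_distrib matrix_vector_mult_scaleR lp_optimal_def)
    have "c \<bullet> y \<le> c \<bullet> (y + s *\<^sub>R u)" if "\<bar>s\<bar> \<le> t" for s
      using less.prems feas[OF that] Aeq[of s] unfolding lp_optimal_def by blast
    note hh = this
    have "c \<bullet> y \<le> c \<bullet> (y + t *\<^sub>R u)" using hh[of t] t by simp
    moreover have "c \<bullet> y \<le> c \<bullet> (y + (-t) *\<^sub>R u)" using hh[of "-t"] t by simp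
    moreover have "c \<bullet> (y + t *\<^sub>R u) = c \<bullet> y + t * (c \<bullet> u)" "c \<bullet> (y + (-t) *\<^sub>R u) = c \<bullet> y - t * (c \<bullet> u)"
      by (simp_all add: inner_add_right inner_diff_right)
    ultimately have "0 \<le> t * (c \<bullet> u)" "0 \<le> - t * (c \<bullet> u)" by simp_all
    then have "t * (c \<bullet> u) = 0" by linarith
    then have cu: "c \<bullet> u = 0" using t by simp
    define u' where "u' = (if \<exists>i. u$i < 0 then u else - u)"
    have u': "supp_in (supp y) u'" "A *v u' = 0" "c \<bullet> u' = 0" "\<exists>i. u'$i < 0"
    proof -
      show "supp_in (supp y) u'" "A *v u' = 0" "c \<bullet> u' = 0" using u cu
        by (auto simp: u'_def supp_in_def mv_neg)
      show "\<exists>i. u'$i < 0"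
      proof (cases "\<exists>i. u$i < 0")
        case True then show ?thesis by (simp add: u'_def)
      next
        case False
        then obtain i where "u$i \<noteq> 0" using u(3) by (metis vec_eq_iff zero_index)
        then have "u$i > 0" using False by (meson not_less_iff_gr_or_eq)
        then show ?thesis using False by (auto simp: u'_def intro!: exI[of _ i])
      qed
    qed
    define N where "N = {i. u'$i < 0}"
    have N: "finite N" "N \<noteq> {}" using u'(4) by (auto simp: N_def)
    have Nsupp: "N \<subseteq> supp y" using u'(1) by (auto simp: N_def supp_in_def supp_def)
    define s where "s = Min ((\<lambda>i. y$i / (- u'$i)) ` N)"
    have "s \<in> (\<lambda>i. y$i / (- u'$i)) ` N" unfolding s_def using N by (intro Min_in) auto
    then obtain i0 where i0: "i0 \<in> N" "s = y$i0 / (- u'$i0)" by auto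
    have sle: "s \<le> y$i / (- u'$i)" if "i \<in> N" for i
      unfolding s_def using N that by (intro Min_le) auto
    define x where "x = y + s *\<^sub>R u'"
    have xnn: "\<forall>i. 0 \<le> x$i"
    proof
      fix i show "0 \<le> x$i"
      proof (cases "i \<in> N")
        case True
        have "s * (- u'$i) \<le> y$i" using sle[OF True] True by (simp add: N_def field_simps)
        then show ?thesis by (simp add: x_def)
      next
        case False
        have yi0: "0 < y$i0" using ypos Nsupp i0(1) by auto
        have ui0: "0 < - u'$i0" using i0(1) by (simp add: N_def)
        have "0 \<le> s" unfolding i0(2) using yi0 ui0 by (intro divide_nonneg_pos) auto
        then show ?thesis using False less.prems by (simp add: x_def N_def lp_optimal_def)
      qed
    qed
    have xA: "A *v x = \<beta>"
      using u'(2) less.prems by (simp add: x_def matrix_vector_right_distrib matrix_vector_mult_scaleR lp_optimal_def)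
    have xc: "c \<bullet> x = c \<bullet> y" using u'(3) by (simp add: x_def inner_add_right)
    have xopt: "lp_optimal A c \<beta> x" using xnn xA xc less.prems by (simp add: lp_optimal_def)
    have "x$i0 = 0" using i0 by (simp add: x_def N_def)
    have "supp x \<subseteq> supp y" using u'(1) by (auto simp: x_def supp_def supp_in_def)
    moreover have "i0 \<in> supp y - supp x" using \<open>x$i0 = 0\<close> i0 Nsupp by (auto simp: supp_def)
    ultimately have "card (supp x) < card (supp y)" by (intro psubset_card_mono) auto
    then show ?thesis using less.hyps xopt by blast
  qed
qed

lemma farkas_cone:
  fixes p :: "'j \<Rightarrow> 'a::euclidean_space"
  assumes "finite J" "\<forall>a. (\<forall>j\<in>J. 0 \<le> a \<bullet> p j) \<longrightarrow> 0 \<le> a \<bullet> z"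
  shows "\<exists>u. (\<forall>j\<in>J. 0 \<le> u j) \<and> z = (\<Sum>j\<in>J. u j *\<^sub>R p j)"
proof -
  define E where "E = {(\<Sum>j\<in>J. u j *\<^sub>R p j) | u. \<forall>j\<in>J. 0 \<le> u j}"
  have "convex_cone E" unfolding convex_cone_iff
  proof (intro conjI ballI allI impI)
    show "0 \<in> E" unfolding E_def by (auto intro!: exI[of _ "\<lambda>_. 0"])
  next
    fix x y assume "x \<in> E" "y \<in> E"
    then obtain u v where "x = (\<Sum>j\<in>J. u j *\<^sub>R p j)" "\<forall>j\<in>J. 0 \<le> u j"
       "y = (\<Sum>j\<in>J. v j *\<^sub>R p j)" "\<forall>j\<in>J. 0 \<le> v j" unfolding E_def by blast
    then show "x + y \<in> E" unfolding E_def
      by (auto intro!: exI[of _ "\<lambda>j. u j + v j"] simp: scaleR_add_left sum.distrib)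
  next
    fix x and r :: real assume "x \<in> E" "0 \<le> r"
    then obtain u where "x = (\<Sum>j\<in>J. u j *\<^sub>R p j)" "\<forall>j\<in>J. 0 \<le> u j" unfolding E_def by blast
    then show "r *\<^sub>R x \<in> E" unfolding E_def using \<open>0 \<le> r\<close>
      by (auto intro!: exI[of _ "\<lambda>j. r * u j"] simp: scaleR_sum_right)
  qed
  moreover have "p ` J \<subseteq> E"
  proof
    fix x assume "x \<in> p ` J"
    then obtain j where j: "j \<in> J" "x = p j" by blast
    have "(\<Sum>k\<in>J. (if k = j then 1 else 0) *\<^sub>R p k) = (\<Sum>k\<in>J. if k = j then p k else 0)"
      by (intro sum.cong) auto
    also have "\<dots> = p j" using j assms(1) by simp
    finally have "(\<Sum>k\<in>J. (if k = j then 1 else 0) *\<^sub>R p k) = p j" .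
    then show "x \<in> E" unfolding E_def using j by (auto intro!: exI[of _ "\<lambda>k. if k = j then 1 else 0"])
  qed
  ultimately have hE: "convex_cone hull (p ` J) \<subseteq> E" by (rule hull_minimal[rotated])
  have "z \<in> convex_cone hull (p ` J)"
  proof (rule ccontr)
    assume nz: "z \<notin> convex_cone hull (p ` J)"
    obtain a b where ab: "a \<bullet> z < b" "\<forall>x\<in>convex_cone hull (p ` J). b < a \<bullet> x"
      using separating_hyperplane_closed_point[OF convex_convex_cone_hull closed_convex_cone_hull nz]
        assms(1) by blast
    have "b < 0" using ab(2) convex_cone_hull_contains_0 by fastforce
    have "0 \<le> a \<bullet> p j" if j: "j \<in> J" for j
    proof (rule ccontr)
      assume neg: "\<not> 0 \<le> a \<bullet> p j"
      define r where "r = b / (a \<bullet> p j)"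
      have "r \<ge> 0" using neg \<open>b < 0\<close> by (simp add: r_def divide_nonpos_neg)
      have "r *\<^sub>R p j \<in> convex_cone hull (p ` J)"
        using j \<open>r \<ge> 0\<close> by (intro convex_cone_hull_mul hull_inc) auto
      then have "b < a \<bullet> (r *\<^sub>R p j)" using ab(2) by blast
      then have "b < r * (a \<bullet> p j)" by (simp add: inner_scaleR_right)
      then show False using neg by (simp add: r_def)
    qed
    then have "0 \<le> a \<bullet> z" using assms(2) by blast
    then show False using ab(1) \<open>b < 0\<close> by simp
  qed
  then show ?thesis using hE unfolding E_def by blast
qed

lemma sum_prod_bool: "(\<Sum>j\<in>(UNIV::('d::finite \<times> bool) set). f j) = (\<Sum>i\<in>UNIV. f (i,True) + f (i,False))"
proof -
  have "(\<Sum>j\<in>(UNIV::('d \<times> bool) set). f j) = (\<Sum>j\<in>(UNIV \<times> UNIV). f j)" by simp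
  also have "\<dots> = (\<Sum>i\<in>UNIV. \<Sum>b\<in>UNIV. f (i,b))"
    by (rule sum.cartesian_product')
  also have "\<dots> = (\<Sum>i\<in>UNIV. f (i,True) + f (i,False))"
    by (simp add: UNIV_bool add.commute)
  finally show ?thesis .
qed

lemma dual_cs:
  fixes A :: "real^'d^'m"
  assumes opt: "lp_optimal A c \<beta> x"
  shows "\<exists>l. (\<forall>i. column i A \<bullet> l \<le> c$i) \<and> (\<forall>i. x$i \<noteq> 0 \<longrightarrow> column i A \<bullet> l = c$i)"
proof (rule ccontr)
  assume nol: "\<not> ?thesis"
  define p :: "'d \<times> bool \<Rightarrow> (real^'m) \<times> real" where
    "p j = (if snd j then (column (fst j) A, c$fst j)
            else if x$fst j \<noteq> 0 then - (column (fst j) A, c$fst j) else (column (fst j) A, c$fst j))" for j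
  have "\<forall>a. (\<forall>j\<in>UNIV. 0 \<le> a \<bullet> p j) \<longrightarrow> 0 \<le> a \<bullet> ((0::real^'m), (-1::real))"
  proof (intro allI impI)
    fix as :: "(real^'m) \<times> real" assume H: "\<forall>j\<in>UNIV. 0 \<le> as \<bullet> p j"
    obtain a s where as: "as = (a, s)" by (cases as)
    show "0 \<le> as \<bullet> ((0::real^'m), (-1::real))"
    proof (rule ccontr)
      assume "\<not> ?thesis"
      then have s: "s > 0" by (simp add: as inner_Pair)
      define l where "l = (- 1 / s) *\<^sub>R a"
      have "column i A \<bullet> l \<le> c$i" for i
      proof -
        have "0 \<le> a \<bullet> column i A + s * c$i" using H[rule_format, of "(i,True)"] by (simp add: as p_def inner_Pair)
        then show ?thesis using s by (simp add: l_def inner_commute field_simps)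
      qed
      moreover have "column i A \<bullet> l = c$i" if "x$i \<noteq> 0" for i
      proof -
        have "0 \<le> a \<bullet> column i A + s * c$i" using H[rule_format, of "(i,True)"] by (simp add: as p_def inner_Pair)
        moreover have "0 \<le> - (a \<bullet> column i A) - s * c$i" using H[rule_format, of "(i,False)"] that by (simp add: as p_def inner_Pair)
        ultimately show ?thesis using s by (simp add: l_def inner_commute field_simps)
      qed
      ultimately show False using nol by blast
    qed
  qed
  from farkas_cone[OF finite_class.finite_UNIV this] obtain u where
    u: "\<forall>j\<in>UNIV. 0 \<le> u j" "((0::real^'m), (-1::real)) = (\<Sum>j\<in>UNIV. u j *\<^sub>R p j)"
    by blast
  define w :: "real^'d" where "w = (\<chi> i. u (i,True) + (if x$i \<noteq> 0 then - u (i,False) else u (i,False)))"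
  have "(\<Sum>j\<in>UNIV. u j *\<^sub>R p j) = (\<Sum>i\<in>UNIV. u (i,True) *\<^sub>R p (i,True) + u (i,False) *\<^sub>R p (i,False))"
    by (rule sum_prod_bool)
  also have "\<dots> = (\<Sum>i\<in>UNIV. w$i *\<^sub>R (column i A, c$i))"
  proof (intro sum.cong refl)
    fix i
    define q where "q = (column i A, c$i)"
    have pT: "p (i,True) = q" by (simp add: p_def q_def)
    have pF: "p (i,False) = (if x$i \<noteq> 0 then - q else q)" by (simp add: p_def q_def)
    have wi: "w$i = u (i,True) + (if x$i \<noteq> 0 then - u (i,False) else u (i,False))" by (simp add: w_def)
    show "u (i,True) *\<^sub>R p (i,True) + u (i,False) *\<^sub>R p (i,False) = w$i *\<^sub>R (column i A, c$i)"
      unfolding pT pF wi q_def[symmetric]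
      by (cases "x$i \<noteq> 0") (simp_all only: if_True if_False scaleR_add_left scaleR_minus_left scaleR_minus_right, simp_all)
  qed
  finally have "(\<Sum>j\<in>UNIV. u j *\<^sub>R p j) = (\<Sum>i\<in>UNIV. w$i *\<^sub>R (column i A, c$i))" .
  with u(2) have sums: "(\<Sum>i\<in>UNIV. w$i *\<^sub>R column i A) = 0" "(\<Sum>i\<in>UNIV. w$i * c$i) = -1"
    by (auto simp: fst_sum snd_sum dest: arg_cong[where f=fst] arg_cong[where f=snd])
  have Aw: "A *v w = 0" using sums(1) by (simp add: mv_col)
  have cw: "c \<bullet> w = -1" using sums(2) by (simp add: inner_vec_def mult.commute)
  have wnn: "0 \<le> w$i" if "x$i = 0" for i using that u(1) by (simp add: w_def)
  have xpos: "\<forall>i\<in>supp x. 0 < x$i" using opt by (auto simp: supp_def lp_optimal_def less_le)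
  obtain t where t: "t > 0" "\<forall>i\<in>supp x. t * \<bar>w$i\<bar> \<le> x$i"
    using small_t[of "supp x" "\<lambda>i. x$i" "\<lambda>i. w$i"] xpos by auto
  have "\<forall>i. 0 \<le> (x + t *\<^sub>R w)$i"
  proof
    fix i show "0 \<le> (x + t *\<^sub>R w)$i"
    proof (cases "x$i = 0")
      case True then show ?thesis using wnn[OF True] t by simp
    next
      case False
      then have "t * \<bar>w$i\<bar> \<le> x$i" using t by (auto simp: supp_def)
      moreover have "t * (- \<bar>w$i\<bar>) \<le> t * w$i" using t(1) by (intro mult_left_mono) auto
      ultimately show ?thesis by simp
    qed
  qed
  moreover have "A *v (x + t *\<^sub>R w) = \<beta>"
    using opt Aw by (simp add: matrix_vector_right_distrib matrix_vector_mult_scaleR lp_optimal_def)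
  ultimately have "c \<bullet> x \<le> c \<bullet> (x + t *\<^sub>R w)" using opt by (simp add: lp_optimal_def)
  then show False using cw t(1) by (simp add: inner_add_right)
qed

definition tightset :: "real^'d^'m \<Rightarrow> real^'d \<Rightarrow> real^'m \<Rightarrow> 'd set" where
  "tightset A c l = {i. column i A \<bullet> l = c$i}"

lemma cols_orth_zero:
  fixes A :: "real^'d^'m"
  assumes "surj ((*v) A)" "\<forall>i. column i A \<bullet> d = 0"
  shows "d = 0"
proof -
  obtain x where "A *v x = d" using assms(1) by (metis surjD)
  then have "d \<bullet> d = (\<Sum>i\<in>UNIV. x$i * (column i A \<bullet> d))" using dot_mv[of d A x] by simp
  also have "\<dots> = 0" using assms(2) by simp
  finally show ?thesis by simp
qed

lemma vertex_dual:
  fixes A :: "real^'d^'m"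
  assumes surj: "surj ((*v) A)" and feas: "\<forall>i. column i A \<bullet> l \<le> c$i"
  shows "\<exists>l'. (\<forall>i. column i A \<bullet> l' \<le> c$i) \<and> tightset A c l \<subseteq> tightset A c l'
           \<and> span ((\<lambda>i. column i A) ` tightset A c l') = UNIV"
  using feas
proof (induction "CARD('m) - dim ((\<lambda>i. column i A) ` tightset A c l)" arbitrary: l rule: less_induct)
  case less
  let ?W = "(\<lambda>i. column i A) ` tightset A c l"
  show ?case
  proof (cases "span ?W = UNIV")
    case True then show ?thesis using less.prems by blast
  next
    case False
    have "dim ?W \<le> DIM(real^'m)" by (rule dim_subset_UNIV)
    moreover have "dim ?W \<noteq> DIM(real^'m)" using False by (simp only: eucl.dim_eq_full) simp
    ultimately have "dim ?W < DIM(real^'m)" by linarith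
    from orthogonal_to_subspace_exists[OF this] obtain d where
      d: "d \<noteq> 0" "\<And>y. y \<in> span ?W \<Longrightarrow> orthogonal d y"
      by blast
    have dT: "column i A \<bullet> d = 0" if "i \<in> tightset A c l" for i
      using d(2)[of "column i A"] that by (auto simp: orthogonal_def inner_commute intro: span_base)
    obtain i1 where i1: "column i1 A \<bullet> d \<noteq> 0" using cols_orth_zero[OF surj] d(1) by blast
    define d' where "d' = (if \<exists>i. column i A \<bullet> d > 0 then d else - d)"
    have d'T: "column i A \<bullet> d' = 0" if "i \<in> tightset A c l" for i
      using dT[OF that] by (simp add: d'_def)
    have d'orth: "\<And>y. y \<in> span ?W \<Longrightarrow> y \<bullet> d' = 0"
      using d(2) by (auto simp: d'_def orthogonal_def inner_commute)
    have "\<exists>i. column i A \<bullet> d' > 0"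
    proof (cases "\<exists>i. column i A \<bullet> d > 0")
      case True then show ?thesis by (simp add: d'_def)
    next
      case False
      then have "column i1 A \<bullet> d < 0" using i1 by (meson not_less_iff_gr_or_eq)
      then show ?thesis using False by (auto simp: d'_def intro!: exI[of _ i1])
    qed
    define P where "P = {i. column i A \<bullet> d' > 0}"
    have P: "finite P" "P \<noteq> {}" using \<open>\<exists>i. column i A \<bullet> d' > 0\<close> by (auto simp: P_def)
    have slack: "column i A \<bullet> l < c$i" if "i \<in> P" for i
      using that less.prems d'T[of i] by (auto simp: P_def tightset_def less_le)
    define s where "s = Min ((\<lambda>i. (c$i - column i A \<bullet> l) / (column i A \<bullet> d')) ` P)"
    have "s \<in> (\<lambda>i. (c$i - column i A \<bullet> l) / (column i A \<bullet> d')) ` P"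
      unfolding s_def using P by (intro Min_in) auto
    then obtain i0 where i0: "i0 \<in> P" "s = (c$i0 - column i0 A \<bullet> l) / (column i0 A \<bullet> d')" by auto
    have sle: "s \<le> (c$i - column i A \<bullet> l) / (column i A \<bullet> d')" if "i \<in> P" for i
      unfolding s_def using P that by (intro Min_le) auto
    have spos: "s > 0" using i0 slack[OF i0(1)] by (simp add: P_def)
    define l' where "l' = l + s *\<^sub>R d'"
    have cl': "column i A \<bullet> l' = column i A \<bullet> l + s * (column i A \<bullet> d')" for i
      by (simp add: l'_def inner_add_right)
    have feas': "\<forall>i. column i A \<bullet> l' \<le> c$i"
    proof
      fix i show "column i A \<bullet> l' \<le> c$i"
      proof (cases "i \<in> P")
        case True
        then have "s * (column i A \<bullet> d') \<le> c$i - column i A \<bullet> l"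
          using sle[OF True] by (simp add: P_def pos_le_divide_eq)
        then show ?thesis by (simp add: cl')
      next
        case False
        then have "s * (column i A \<bullet> d') \<le> 0" using spos by (simp add: P_def mult_nonneg_nonpos)
        then show ?thesis using cl'[of i] less.prems[rule_format, of i] by linarith
      qed
    qed
    have sub: "tightset A c l \<subseteq> tightset A c l'" using d'T by (auto simp: tightset_def cl')
    have i0t: "i0 \<in> tightset A c l'" using i0 by (simp add: tightset_def cl' P_def)
    have "column i0 A \<notin> span ?W"
      using d'orth[of "column i0 A"] i0(1) by (auto simp: P_def)
    moreover have "column i0 A \<in> span ((\<lambda>i. column i A) ` tightset A c l')"
      using i0t by (intro span_base) auto
    moreover have "span ?W \<subseteq> span ((\<lambda>i. column i A) ` tightset A c l')"
      using sub by (intro span_mono image_mono)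
    ultimately have "span ?W \<subset> span ((\<lambda>i. column i A) ` tightset A c l')" by blast
    then have "dim ?W < dim ((\<lambda>i. column i A) ` tightset A c l')" by (rule eucl.dim_psubset)
    moreover have "dim ((\<lambda>i. column i A) ` tightset A c l') \<le> CARD('m)"
      using dim_subset_UNIV[of "(\<lambda>i. column i A) ` tightset A c l'"] by simp
    ultimately have "CARD('m) - dim ((\<lambda>i. column i A) ` tightset A c l') < CARD('m) - dim ?W"
      by linarith
    from less.hyps[OF this feas'] sub show ?thesis by blast
  qed
qed

lemma mv_supp:
  fixes A :: "real^'d^'m"
  assumes "supp_in J z"
  shows "A *v z = (\<Sum>i\<in>J. z$i *\<^sub>R column i A)"
proof -
  have "A *v z = (\<Sum>i\<in>UNIV. z$i *\<^sub>R column i A)" by (rule mv_col)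
  also have "\<dots> = (\<Sum>i\<in>J. z$i *\<^sub>R column i A)"
    using assms by (intro sum.mono_neutral_right) (auto simp: supp_in_def)
  finally show ?thesis .
qed

lemma basis_extend:
  fixes A :: "real^'d^'m"
  assumes ST: "S \<subseteq> T" and indS: "\<forall>z. supp_in S z \<and> A *v z = 0 \<longrightarrow> z = 0"
    and spT: "span ((\<lambda>i. column i A) ` T) = UNIV"
  shows "\<exists>I. S \<subseteq> I \<and> I \<subseteq> T \<and> is_basis A I"
proof -
  define F where "F = {J. S \<subseteq> J \<and> J \<subseteq> T \<and> (\<forall>z. supp_in J z \<and> A *v z = 0 \<longrightarrow> z = 0)}"
  have finF: "finite F" by (simp add: F_def)
  have "S \<in> F" using ST indS by (simp add: F_def)
  define k where "k = Max (card ` F)"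
  have "k \<in> card ` F" unfolding k_def using finF \<open>S \<in> F\<close> by (intro Max_in) auto
  then obtain J where J: "J \<in> F" "card J = k" by auto
  have Jmax: "card J' \<le> card J" if "J' \<in> F" for J'
    using J finF that unfolding k_def by (auto intro: Max_ge)
  have indJ: "\<forall>z. supp_in J z \<and> A *v z = 0 \<longrightarrow> z = 0" using J by (simp add: F_def)
  have colT: "column t A \<in> span ((\<lambda>i. column i A) ` J)" if t: "t \<in> T" for t
  proof (cases "t \<in> J")
    case True then show ?thesis by (intro span_base) auto
  next
    case False
    have "insert t J \<notin> F"
    proof
      assume "insert t J \<in> F"
      then have "card (insert t J) \<le> card J" by (rule Jmax)
      then show False using False by (simp add: card_insert_if)
    qed
    then obtain z where z: "supp_in (insert t J) z" "A *v z = 0" "z \<noteq> 0"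
      using J t by (auto simp: F_def)
    have zt: "z$t \<noteq> 0"
    proof
      assume "z$t = 0"
      then have "supp_in J z" using z(1) by (auto simp: supp_in_def)
      then show False using indJ z by blast
    qed
    have "0 = (\<Sum>i\<in>insert t J. z$i *\<^sub>R column i A)" using mv_supp[OF z(1), of A] z(2) by simp
    also have "\<dots> = z$t *\<^sub>R column t A + (\<Sum>i\<in>J. z$i *\<^sub>R column i A)"
      using False by (simp add: sum.insert)
    finally have eq: "z$t *\<^sub>R column t A = - (\<Sum>i\<in>J. z$i *\<^sub>R column i A)"
      by (simp add: eq_neg_iff_add_eq_0)
    have "column t A = inverse (z$t) *\<^sub>R (z$t *\<^sub>R column t A)" using zt by simp
    also have "\<dots> = (- inverse (z$t)) *\<^sub>R (\<Sum>i\<in>J. z$i *\<^sub>R column i A)" unfolding eq by simp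
    finally have ct: "column t A = (- inverse (z$t)) *\<^sub>R (\<Sum>i\<in>J. z$i *\<^sub>R column i A)" .
    have S: "(\<Sum>i\<in>J. z$i *\<^sub>R column i A) \<in> span ((\<lambda>i. column i A) ` J)"
      by (intro span_sum span_scale span_base) auto
    show ?thesis unfolding ct by (rule span_scale[OF S])
  qed
  have "span ((\<lambda>i. column i A) ` J) = UNIV"
  proof -
    have "(\<lambda>i. column i A) ` T \<subseteq> span ((\<lambda>i. column i A) ` J)" using colT by auto
    then have "span ((\<lambda>i. column i A) ` T) \<subseteq> span ((\<lambda>i. column i A) ` J)"
      by (simp add: span_subspace_induct span_minimal)
    then show ?thesis using spT by auto
  qed
  moreover have "span ((\<lambda>i. column i A) ` J) \<subseteq> (*v) A ` suppsp J"
  proof (rule span_minimal)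
    show "(\<lambda>i. column i A) ` J \<subseteq> (*v) A ` suppsp J"
    proof
      fix v assume "v \<in> (\<lambda>i. column i A) ` J"
      then obtain j where j: "j \<in> J" "v = column j A" by blast
      have "axis j 1 \<in> suppsp J" using j by (simp add: suppsp_def supp_in_def axis_def)
      then show "v \<in> (*v) A ` suppsp J"
        by (rule image_eqI[where x="axis j 1", rotated]) (simp add: j matrix_vector_mult_basis)
    qed
    show "subspace ((*v) A ` suppsp J)"
      using linear_subspace_image[OF matrix_vector_mul_linear subspace_suppsp] .
  qed
  ultimately have img: "(*v) A ` suppsp J = UNIV" by auto
  have injJ: "inj_on ((*v) A) (suppsp J)"
  proof (rule inj_onI)
    fix x y assume xy: "x \<in> suppsp J" "y \<in> suppsp J" "A *v x = A *v y"
    have "supp_in J (x - y)" using xy by (auto simp: suppsp_def supp_in_def)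
    moreover have "A *v (x - y) = 0" using xy by (simp add: matrix_vector_mult_diff_distrib)
    ultimately show "x = y" using indJ by auto
  qed
  have lin: "linear ((*v) A)" by simp
  have sp: "span (suppsp J) = suppsp J" by (simp add: subspace_suppsp)
  have "dim ((*v) A ` suppsp J) = dim (suppsp J)"
    using eucl.dim_image_eq[OF lin, of "suppsp J"] injJ sp by simp
  moreover have "dim ((*v) A ` suppsp J) = CARD('m)" unfolding img by (simp add: dim_UNIV)
  ultimately have "card J = CARD('m)" by (simp add: dim_suppsp)
  then have "is_basis A J" using indJ by (simp add: is_basis_def)
  then show ?thesis using J by (auto simp: F_def)
qed

lemma opt_basis:
  fixes A :: "real^'d^'m"
  assumes surj: "surj ((*v) A)" and opt: "lp_optimal A c \<beta> y"
  shows "\<exists>I. dual_feasible_basis A c I \<and> (\<forall>i. 0 \<le> basic_sol A I \<beta> $ i)"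
proof -
  obtain x where x: "lp_optimal A c \<beta> x" "\<forall>z. supp_in (supp x) z \<and> A *v z = 0 \<longrightarrow> z = 0"
    using indep_opt[OF opt] by blast
  obtain l where l: "\<forall>i. column i A \<bullet> l \<le> c$i" "\<forall>i. x$i \<noteq> 0 \<longrightarrow> column i A \<bullet> l = c$i"
    using dual_cs[OF x(1)] by blast
  obtain l' where l': "\<forall>i. column i A \<bullet> l' \<le> c$i" "tightset A c l \<subseteq> tightset A c l'"
      "span ((\<lambda>i. column i A) ` tightset A c l') = UNIV"
    using vertex_dual[OF surj l(1)] by blast
  have "supp x \<subseteq> tightset A c l'" using l(2) l'(2) by (auto simp: supp_def tightset_def)
  then obtain I where I: "supp x \<subseteq> I" "I \<subseteq> tightset A c l'" "is_basis A I"
    using basis_extend[OF _ x(2) l'(3)] by blast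
  have "dual_sol A c I = l'" using I by (intro dual_sol_unique) (auto simp: tightset_def)
  then have "dual_feasible_basis A c I" using I(3) l'(1) by (simp add: dfb_char)
  moreover have "basic_sol A I \<beta> = x"
  proof (rule basic_sol_unique[OF I(3)])
    show "supp_in I x" using I(1) by (auto simp: supp_in_def supp_def)
    show "A *v x = \<beta>" using x(1) unfolding lp_optimal_def by blast
  qed
  moreover have "\<forall>i. 0 \<le> x$i" using x(1) unfolding lp_optimal_def by blast
  ultimately show ?thesis by (intro exI[of _ I]) simp
qed




lemma basis_opt:
  fixes A :: "real^'d^'m"
  assumes "dual_feasible_basis A c I" "\<forall>i. 0 \<le> basic_sol A I \<beta> $ i"
  shows "lp_optimal A c \<beta> (basic_sol A I \<beta>)"
proof -
  have I: "is_basis A I" "\<forall>i. column i A \<bullet> dual_sol A c I \<le> c$i" using assms(1) by (auto simp: dfb_char)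
  have "c \<bullet> basic_sol A I \<beta> \<le> c \<bullet> y" if "\<forall>i. 0 \<le> y$i" "A *v y = \<beta>" for y
  proof -
    have "c \<bullet> basic_sol A I \<beta> = dual_sol A c I \<bullet> (A *v y)" using dual_basic[OF I(1)] that(2) by simp
    also have "\<dots> \<le> c \<bullet> y" by (rule weak_duality[OF I(2) that(1)])
    finally show ?thesis .
  qed
  then show ?thesis using assms(2) basic_sol[OF I(1)] by (simp add: lp_optimal_def)
qed

lemma slack_zero:
  fixes A :: "real^'d^'m"
  assumes feas: "\<forall>i. column i A \<bullet> l \<le> c$i" and y: "\<forall>i. 0 \<le> y$i"
    and eq: "c \<bullet> y \<le> l \<bullet> (A *v y)" and i: "column i A \<bullet> l < c$i"
  shows "y$i = 0"
proof -
  have "l \<bullet> (A *v y) = (\<Sum>j\<in>UNIV. y$j * (column j A \<bullet> l))" by (rule dot_mv)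
  moreover have "c \<bullet> y = (\<Sum>j\<in>UNIV. y$j * c$j)" by (simp add: inner_vec_def mult.commute)
  ultimately have "(\<Sum>j\<in>UNIV. y$j * (c$j - column j A \<bullet> l)) \<le> 0"
    using eq by (simp add: right_diff_distrib sum_subtractf)
  moreover have "\<forall>j\<in>UNIV. 0 \<le> y$j * (c$j - column j A \<bullet> l)" using feas y by simp
  ultimately have "(\<Sum>j\<in>UNIV. y$j * (c$j - column j A \<bullet> l)) = 0"
    by (meson antisym sum_nonneg)
  moreover have "\<And>j. 0 \<le> y$j * (c$j - column j A \<bullet> l)" using feas y by simp
  ultimately have "y$i * (c$i - column i A \<bullet> l) = 0"
    using sum_nonneg_eq_0_iff[of UNIV "\<lambda>j. y$j * (c$j - column j A \<bullet> l)"] by simp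
  then show ?thesis using i by simp
qed

locale lpsetup =
  fixes A :: "real^'d^'m" and b :: "real^'m" and c :: "real^'d" and Is :: "'d set list"
  assumes surj: "surj ((*v) A)"
    and enum: "distinct Is" "set Is = {I. dual_feasible_basis A c I \<and> (\<forall>i. 0 \<le> basic_sol A I b $ i)}"
    and A2: "\<exists>!x. lp_optimal A c b x"
    and A3: "distinct (map (dual_sol A c) Is)"
begin

definition "xst = lp_xstar A c b"

lemma xst_opt: "lp_optimal A c b xst"
  unfolding xst_def lp_xstar_def using theI'[OF A2] .

lemma xst_unique: "lp_optimal A c b x \<Longrightarrow> x = xst"
  using A2 xst_opt by blast

lemma xst_nn: "0 \<le> xst$i" using xst_opt by (simp add: lp_optimal_def)

lemma Pos_eq: "Pos A c b = {i. xst$i \<noteq> 0}"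
  using xst_nn by (auto simp: Pos_def xst_def[symmetric] less_le)

lemma Is_props:
  assumes "I \<in> set Is"
  shows "dual_feasible_basis A c I" "is_basis A I" "basic_sol A I b = xst" "Pos A c b \<subseteq> I"
    "\<forall>i. column i A \<bullet> dual_sol A c I \<le> c$i"
proof -
  show dfb: "dual_feasible_basis A c I" using assms enum by auto
  show B: "is_basis A I" using dfb by (simp add: dual_feasible_basis_def)
  show "\<forall>i. column i A \<bullet> dual_sol A c I \<le> c$i" using dfb by (simp add: dfb_char)
  show bs: "basic_sol A I b = xst" using basis_opt[OF dfb] assms enum xst_unique by auto
  show "Pos A c b \<subseteq> I" using basic_sol(1)[OF B, of b] bs by (auto simp: Pos_eq supp_in_def)
qed

lemma tight_eq:
  assumes I: "I \<in> set Is" and t: "column t A \<bullet> dual_sol A c I = c$t"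
  shows "t \<in> I"
proof (rule ccontr)
  assume tI: "t \<notin> I"
  note IP = Is_props[OF I]
  define l where "l = dual_sol A c I"
  have lI: "\<forall>i\<in>I. column i A \<bullet> l = c$i" using dual_sol[OF IP(2)] by (simp add: l_def)
  define \<beta> where "\<beta> = basic_sol A I (column t A)"
  have \<beta>: "supp_in I \<beta>" "A *v \<beta> = column t A" using basic_sol[OF IP(2)] by (auto simp: \<beta>_def)
  show False
  proof (cases "\<exists>j\<in>I - Pos A c b. \<beta>$j \<noteq> 0")
    case True
    then obtain j where j: "j \<in> I" "j \<notin> Pos A c b" "\<beta>$j \<noteq> 0" by blast
    define I' where "I' = insert t (I - {j})"
    have finI: "finite I" by simp
    have "card I > 0" using j finI by (auto simp: card_gt_0_iff)
    then have cardI': "card I' = card I" using tI j finI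
      by (simp add: I'_def card_insert_if card_Diff_singleton)
    have indI': "z = 0" if z: "supp_in I' z" "A *v z = 0" for z
    proof -
      define z' where "z' = (\<chi> i. if i = j \<or> i = t then 0 else z$i)"
      define w where "w = z$t *\<^sub>R \<beta> + z'"
      have wi: "w$i = z$t * \<beta>$i + (if i = j \<or> i = t then 0 else z$i)" for i by (simp add: w_def z'_def)
      have wsupp: "supp_in I w" using z(1) \<beta>(1) tI j by (auto simp: supp_in_def wi I'_def)
      have zdec: "z = z$t *\<^sub>R axis t 1 + z'"
        using z(1) j tI by (auto simp: vec_eq_iff supp_in_def I'_def axis_def z'_def)
      have "A *v w = z$t *\<^sub>R column t A + A *v z'"
        using \<beta>(2) by (simp add: w_def matrix_vector_right_distrib matrix_vector_mult_scaleR)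
      also have "\<dots> = A *v z"
        by (subst (2) zdec) (simp add: matrix_vector_right_distrib matrix_vector_mult_scaleR matrix_vector_mult_basis)
      finally have "A *v w = 0" using z(2) by simp
      then have w0: "w = 0" using IP(2) wsupp by (auto simp: is_basis_def)
      then have "z$t * \<beta>$j = 0" using wi[of j] by simp
      then have zt: "z$t = 0" using j by simp
      have "\<forall>i. z$i = 0"
      proof
        fix i show "z$i = 0"
        proof (cases "i = j \<or> i = t")
          case True then show ?thesis using z(1) tI j zt by (auto simp: supp_in_def I'_def)
        next
          case False
          then have "w$i = z$i" using zt by (simp add: wi)
          then show ?thesis using w0 by simp
        qed
      qed
      then show "z = 0" by (simp add: vec_eq_iff)
    qed
    have B': "is_basis A I'" using cardI' indI' IP(2) by (auto simp: is_basis_def)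
    have "\<forall>i\<in>I'. column i A \<bullet> l = c$i" using lI t by (auto simp: I'_def l_def)
    then have dl: "dual_sol A c I' = l" by (rule dual_sol_unique[OF B'])
    have dfb': "dual_feasible_basis A c I'" using B' IP(5) dl by (simp add: dfb_char l_def)
    have "basic_sol A I' b = xst"
    proof (rule basic_sol_unique[OF B'])
      show "supp_in I' xst" using j IP(4) by (auto simp: supp_in_def I'_def Pos_eq)
      show "A *v xst = b" using xst_opt by (simp add: lp_optimal_def)
    qed
    then have "I' \<in> set Is" using dfb' enum xst_nn by auto
    moreover have "I' \<noteq> I" using tI by (auto simp: I'_def)
    moreover have "dual_sol A c I' = dual_sol A c I" using dl by (simp add: l_def)
    ultimately show False using A3 I by (auto simp: distinct_map inj_on_def)
  next
    case False
    then have \<beta>P: "\<forall>i. \<beta>$i \<noteq> 0 \<longrightarrow> i \<in> Pos A c b" using \<beta>(1) by (auto simp: supp_in_def)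
    define z where "z = axis t 1 - \<beta>"
    have Az: "A *v z = 0" using \<beta>(2) by (simp add: z_def matrix_vector_mult_diff_distrib matrix_vector_mult_basis)
    have "c \<bullet> \<beta> = l \<bullet> column t A" using dual_basic[OF IP(2), of c "column t A"] by (simp add: l_def \<beta>_def)
    then have cz: "c \<bullet> z = 0" using t by (simp add: z_def inner_diff_right inner_axis l_def inner_commute)
    have pos: "\<forall>i\<in>Pos A c b. 0 < xst$i" by (auto simp: Pos_def xst_def)
    obtain e where e: "e > 0" "\<forall>i\<in>Pos A c b. e * \<bar>z$i\<bar> \<le> xst$i"
      using small_t[of "Pos A c b" "\<lambda>i. xst$i" "\<lambda>i. z$i"] pos by auto
    define x' where "x' = xst + e *\<^sub>R z"
    have tnP: "t \<notin> Pos A c b" using tI IP(4) by auto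
    have "0 \<le> x'$i" for i
    proof (cases "i \<in> Pos A c b")
      case True
      have h1: "e * (- \<bar>z$i\<bar>) \<le> e * z$i" using e(1) by (intro mult_left_mono) auto
      have "x'$i = xst$i + e * z$i" by (simp add: x'_def)
      then show ?thesis using h1 e(2) True by auto
    next
      case False
      then have "\<beta>$i = 0" using \<beta>P by blast
      then have "z$i \<ge> 0" by (simp add: z_def axis_def)
      then show ?thesis using xst_nn[of i] e(1) by (simp add: x'_def)
    qed
    moreover have "A *v x' = b" using xst_opt Az
      by (simp add: x'_def lp_optimal_def matrix_vector_right_distrib matrix_vector_mult_scaleR)
    moreover have "c \<bullet> x' = c \<bullet> xst" using cz by (simp add: x'_def inner_add_right)
    ultimately have "lp_optimal A c b x'" using xst_opt by (auto simp: lp_optimal_def)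
    then have "x' = xst" by (rule xst_unique)
    moreover have "\<beta>$t = 0" using \<beta>P tnP by blast
    then have "z$t = 1" by (simp add: z_def axis_def)
    ultimately have "e *\<^sub>R z = 0" by (simp add: x'_def)
    then have "z = 0" using e(1) by simp
    then show False using \<open>z$t = 1\<close> by simp
  qed
qed


lemma slack_strict:
  assumes "I \<in> set Is" "i \<notin> I"
  shows "column i A \<bullet> dual_sol A c I < c$i"
proof -
  have le: "column i A \<bullet> dual_sol A c I \<le> c$i" using Is_props(5)[OF assms(1)] by blast
  have ne: "column i A \<bullet> dual_sol A c I \<noteq> c$i" using tight_eq[OF assms(1), of i] assms(2) by blast
  show ?thesis using le ne by (simp add: less_le)
qed

lemma uniq_opt:
  assumes I: "I \<in> set Is" and nn: "\<forall>i. 0 \<le> basic_sol A I \<beta> $ i" and y: "lp_optimal A c \<beta> y"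
  shows "y = basic_sol A I \<beta>"
proof -
  note IP = Is_props[OF I]
  have y1: "\<forall>i. 0 \<le> y$i" and y2: "A *v y = \<beta>"
    and y3: "\<forall>z. (\<forall>i. 0 \<le> z$i) \<and> A *v z = \<beta> \<longrightarrow> c \<bullet> y \<le> c \<bullet> z"
    using y unfolding lp_optimal_def by auto
  let ?x = "basic_sol A I \<beta>"
  have "c \<bullet> y \<le> c \<bullet> ?x" using y3 nn basic_sol(2)[OF IP(2)] by blast
  also have "\<dots> = dual_sol A c I \<bullet> \<beta>" by (rule dual_basic[OF IP(2)])
  finally have le: "c \<bullet> y \<le> dual_sol A c I \<bullet> (A *v y)" using y2 by simp
  have "supp_in I y" unfolding supp_in_def
  proof (intro allI impI)
    fix i assume "i \<notin> I"
    then show "y$i = 0" by (rule slack_zero[OF IP(5) y1 le slack_strict[OF I]])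
  qed
  then show ?thesis using basic_sol_unique[OF IP(2) _ y2] by simp
qed

lemma basic_add:
  assumes "is_basis A I"
  shows "basic_sol A I (u + v) = basic_sol A I u + basic_sol A I v"
    "basic_sol A I (r *\<^sub>R u) = r *\<^sub>R basic_sol A I u"
  using basic_sol_linear[OF assms] by (simp_all add: linear_add linear_scale)

lemma basic_bl: "is_basis A I \<Longrightarrow> bounded_linear (basic_sol A I)"
  using basic_sol_linear linear_conv_bounded_linear by blast

lemma basic_tendsto:
  assumes "is_basis A I"
  shows "((\<lambda>w. basic_sol A I (\<beta> + w) $ i) \<longlongrightarrow> basic_sol A I \<beta> $ i) (at 0)"
proof -
  have lin: "linear (basic_sol A I)" by (rule basic_sol_linear[OF assms])
  have "isCont (basic_sol A I) 0" by (rule linear_continuous_at[OF basic_bl[OF assms]])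
  then have "(basic_sol A I \<longlongrightarrow> 0) (at 0)" using linear_0[OF lin] by (simp add: isCont_def)
  then have "((\<lambda>w. basic_sol A I \<beta> + basic_sol A I w) \<longlongrightarrow> basic_sol A I \<beta> + 0) (at 0)"
    by (intro tendsto_add tendsto_const)
  then have "((\<lambda>w. basic_sol A I (\<beta> + w)) \<longlongrightarrow> basic_sol A I \<beta>) (at 0)"
    by (simp add: basic_add[OF assms])
  then show ?thesis by (rule tendsto_vec_nth)
qed

lemma dfb_near:
  "\<exists>\<delta>>0. \<forall>w. norm w < \<delta> \<longrightarrow> (\<forall>I. dual_feasible_basis A c I \<and> (\<forall>i. 0 \<le> basic_sol A I (b + w) $ i) \<longrightarrow> I \<in> set Is)"
proof -
  define bad where "bad = {I. dual_feasible_basis A c I \<and> I \<notin> set Is}"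
  have "\<forall>I\<in>bad. eventually (\<lambda>w. \<not> (\<forall>i. 0 \<le> basic_sol A I (b + w) $ i)) (at (0::real^'m))"
  proof
    fix I assume "I \<in> bad"
    then have I: "dual_feasible_basis A c I" "I \<notin> set Is" by (auto simp: bad_def)
    then obtain i where i: "basic_sol A I b $ i < 0" using enum by (auto simp: not_le)
    have "is_basis A I" using I by (simp add: dual_feasible_basis_def)
    from order_tendstoD(2)[OF basic_tendsto[OF this, of b i] i]
    show "eventually (\<lambda>w. \<not> (\<forall>i. 0 \<le> basic_sol A I (b + w) $ i)) (at 0)"
      by (rule eventually_mono) (auto simp: not_le)
  qed
  then have "eventually (\<lambda>w. \<forall>I\<in>bad. \<not> (\<forall>i. 0 \<le> basic_sol A I (b + w) $ i)) (at (0::real^'m))"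
    by (intro eventually_ball_finite) auto
  then obtain \<delta> where \<delta>: "\<delta> > 0" "\<And>w. w \<noteq> 0 \<Longrightarrow> dist w 0 < \<delta> \<Longrightarrow> \<forall>I\<in>bad. \<not> (\<forall>i. 0 \<le> basic_sol A I (b + w) $ i)"
    unfolding eventually_at by blast
  show ?thesis
  proof (intro exI[of _ \<delta>] conjI allI impI)
    show "\<delta> > 0" by (rule \<delta>(1))
  next
    fix w :: "real^'m" and I assume w: "norm w < \<delta>"
      and H: "dual_feasible_basis A c I \<and> (\<forall>i. 0 \<le> basic_sol A I (b + w) $ i)"
    show "I \<in> set Is"
    proof (cases "w = 0")
      case True then show ?thesis using H enum by simp
    next
      case False
      then show ?thesis using \<delta>(2)[OF False] w H by (auto simp: bad_def)
    qed
  qed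
qed

lemma local_sol:
  "\<exists>\<delta>>0. \<forall>w. norm w < \<delta> \<longrightarrow> (\<forall>y. lp_optimal A c (b + w) y \<longrightarrow>
      (\<exists>I\<in>set Is. w \<in> Hcone A c b I \<and> y = xst + basic_sol A I w))"
proof -
  obtain \<delta> where \<delta>: "\<delta> > 0" "\<forall>w. norm w < \<delta> \<longrightarrow> (\<forall>I. dual_feasible_basis A c I \<and> (\<forall>i. 0 \<le> basic_sol A I (b + w) $ i) \<longrightarrow> I \<in> set Is)"
    using dfb_near by blast
  show ?thesis
  proof (intro exI[of _ \<delta>] conjI allI impI)
    show "\<delta> > 0" by (rule \<delta>(1))
  next
    fix w :: "real^'m" and y assume w: "norm w < \<delta>" and y: "lp_optimal A c (b + w) y"
    obtain I where I: "dual_feasible_basis A c I" "\<forall>i. 0 \<le> basic_sol A I (b + w) $ i"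
      using opt_basis[OF surj y] by blast
    have IIs: "I \<in> set Is" using \<delta>(2) w I by blast
    note IP = Is_props[OF IIs]
    have ysol: "y = basic_sol A I (b + w)" by (rule uniq_opt[OF IIs I(2) y])
    have dec: "basic_sol A I (b + w) = xst + basic_sol A I w" using basic_add(1)[OF IP(2)] IP(3) by simp
    have "w \<in> Hcone A c b I" unfolding Hcone_def
    proof (intro CollectI ballI)
      fix i assume "i \<in> I - Pos A c b"
      then have "xst$i = 0" by (simp add: Pos_eq)
      then show "0 \<le> basic_sol A I w $ i" using I(2)[rule_format, of i] dec by simp
    qed
    then show "\<exists>I\<in>set Is. w \<in> Hcone A c b I \<and> y = xst + basic_sol A I w" using IIs ysol dec by blast
  qed
qed

lemma pos_sol:
  assumes I: "I \<in> set Is" and w: "w \<in> Hcone A c b I" and t: "0 \<le> t"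
    and small: "\<forall>i\<in>Pos A c b. t * \<bar>basic_sol A I w $ i\<bar> \<le> xst$i"
  shows "\<forall>i. 0 \<le> basic_sol A I (b + t *\<^sub>R w) $ i"
proof
  fix i
  note IP = Is_props[OF I]
  have eq: "basic_sol A I (b + t *\<^sub>R w) $ i = xst$i + t * basic_sol A I w $ i"
    using basic_add[OF IP(2)] IP(3) by simp
  show "0 \<le> basic_sol A I (b + t *\<^sub>R w) $ i"
  proof (cases "i \<in> Pos A c b")
    case True
    have "t * (- \<bar>basic_sol A I w $ i\<bar>) \<le> t * basic_sol A I w $ i" using t by (intro mult_left_mono) auto
    then show ?thesis using small True eq by auto
  next
    case False
    show ?thesis
    proof (cases "i \<in> I")
      case True
      then have "0 \<le> basic_sol A I w $ i" using w False by (auto simp: Hcone_def)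
      then show ?thesis using eq xst_nn[of i] t by simp
    next
      case False
      then have "basic_sol A I w $ i = 0" using basic_sol(1)[OF IP(2), of w] by (simp add: supp_in_def)
      then show ?thesis using eq xst_nn[of i] by simp
    qed
  qed
qed

lemma consist:
  assumes I: "I \<in> set Is" and J: "J \<in> set Is" and wI: "w \<in> Hcone A c b I" and wJ: "w \<in> Hcone A c b J"
  shows "basic_sol A I w = basic_sol A J w"
proof -
  have pos: "\<forall>i\<in>Pos A c b. 0 < xst$i" by (auto simp: Pos_def xst_def)
  obtain t where t: "t > 0" "\<forall>i\<in>Pos A c b. t * \<bar>\<bar>basic_sol A I w $ i\<bar> + \<bar>basic_sol A J w $ i\<bar>\<bar> \<le> xst$i"
    using small_t[of "Pos A c b" "\<lambda>i. xst$i" "\<lambda>i. \<bar>basic_sol A I w $ i\<bar> + \<bar>basic_sol A J w $ i\<bar>"] pos by auto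
  have sI: "\<forall>i\<in>Pos A c b. t * \<bar>basic_sol A I w $ i\<bar> \<le> xst$i"
  proof
    fix i assume "i \<in> Pos A c b"
    then have "t * \<bar>\<bar>basic_sol A I w $ i\<bar> + \<bar>basic_sol A J w $ i\<bar>\<bar> \<le> xst$i" using t by blast
    moreover have "t * \<bar>basic_sol A I w $ i\<bar> \<le> t * \<bar>\<bar>basic_sol A I w $ i\<bar> + \<bar>basic_sol A J w $ i\<bar>\<bar>"
      using t(1) by (intro mult_left_mono) auto
    ultimately show "t * \<bar>basic_sol A I w $ i\<bar> \<le> xst$i" by linarith
  qed
  have sJ: "\<forall>i\<in>Pos A c b. t * \<bar>basic_sol A J w $ i\<bar> \<le> xst$i"
  proof
    fix i assume "i \<in> Pos A c b"
    then have "t * \<bar>\<bar>basic_sol A I w $ i\<bar> + \<bar>basic_sol A J w $ i\<bar>\<bar> \<le> xst$i" using t by blast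
    moreover have "t * \<bar>basic_sol A J w $ i\<bar> \<le> t * \<bar>\<bar>basic_sol A I w $ i\<bar> + \<bar>basic_sol A J w $ i\<bar>\<bar>"
      using t(1) by (intro mult_left_mono) auto
    ultimately show "t * \<bar>basic_sol A J w $ i\<bar> \<le> xst$i" by linarith
  qed
  have nI: "\<forall>i. 0 \<le> basic_sol A I (b + t *\<^sub>R w) $ i" using pos_sol[OF I wI _ sI] t by simp
  have nJ: "\<forall>i. 0 \<le> basic_sol A J (b + t *\<^sub>R w) $ i" using pos_sol[OF J wJ _ sJ] t by simp
  have "lp_optimal A c (b + t *\<^sub>R w) (basic_sol A J (b + t *\<^sub>R w))"
    by (rule basis_opt[OF Is_props(1)[OF J] nJ])
  then have "basic_sol A J (b + t *\<^sub>R w) = basic_sol A I (b + t *\<^sub>R w)" by (rule uniq_opt[OF I nI])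
  then have "xst + t *\<^sub>R basic_sol A J w = xst + t *\<^sub>R basic_sol A I w"
    using basic_add[OF Is_props(2)[OF I]] basic_add[OF Is_props(2)[OF J]] Is_props(3)[OF I] Is_props(3)[OF J]
    by simp
  then show ?thesis using t(1) by simp
qed

lemma limit_map_eq:
  assumes I: "I \<in> set Is" and w: "w \<in> Hcone A c b I"
  shows "limit_map A c b Is w = basic_sol A I w"
proof -
  let ?H = "\<lambda>k. Hcone A c b (Is ! k)"
  obtain k1 where k1: "k1 < length Is" "Is ! k1 = I" using I by (auto simp: in_set_conv_nth)
  define k0 where "k0 = (LEAST k. k < length Is \<and> w \<in> ?H k)"
  have k0: "k0 < length Is" "w \<in> ?H k0" using LeastI[of "\<lambda>k. k < length Is \<and> w \<in> ?H k" k1] k1 w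
    by (auto simp: k0_def)
  have notbefore: "w \<notin> ?H j" if "j < k0" for j
    using not_less_Least[of j "\<lambda>k. k < length Is \<and> w \<in> ?H k"] that k0(1) by (auto simp: k0_def)
  have ind: "indicator (?H k - (\<Union>j<k. ?H j)) w = (if k = k0 then 1 else (0::real))" if "k < length Is" for k
  proof (cases "k = k0")
    case True then show ?thesis using k0 notbefore by (auto simp: indicator_def)
  next
    case False
    show ?thesis
    proof (cases "k < k0")
      case True then show ?thesis using notbefore False by (auto simp: indicator_def)
    next
      case False2: False
      then have "k0 < k" using False by simp
      then show ?thesis using k0 False by (auto simp: indicator_def)
    qed
  qed
  have "limit_map A c b Is w = (\<Sum>k<length Is. (if k = k0 then basic_sol A (Is ! k) w else 0))"
    unfolding limit_map_def by (intro sum.cong refl) (simp add: ind)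
  also have "\<dots> = basic_sol A (Is ! k0) w" using k0(1) by simp
  also have "\<dots> = basic_sol A I w" using consist[OF _ I k0(2) w] k0(1) by simp
  finally show ?thesis .
qed

lemma comp_cont: "is_basis A I \<Longrightarrow> continuous_on S (\<lambda>v. basic_sol A I v $ i)"
  by (rule linear_continuous_on) (rule bounded_linear_compose[OF bounded_linear_vec_nth basic_bl])

lemma closed_Hcone:
  assumes "I \<in> set Is"
  shows "closed (Hcone A c b I)"
proof -
  have "Hcone A c b I = (\<Inter>i\<in>I - Pos A c b. {v. 0 \<le> basic_sol A I v $ i})" by (auto simp: Hcone_def)
  moreover have "closed {v. 0 \<le> basic_sol A I v $ i}" for i
    using Is_props(2)[OF assms] by (intro closed_Collect_le continuous_on_const comp_cont)
  ultimately show ?thesis by auto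
qed

lemma limit_map_cont: "continuous_on (\<Union>I\<in>set Is. Hcone A c b I) (limit_map A c b Is)"
proof (rule continuous_on_closed_Union)
  show "finite (set Is)" by simp
next
  fix I assume I: "I \<in> set Is"
  then show "closed (Hcone A c b I)" by (rule closed_Hcone)
  have "continuous_on (Hcone A c b I) (basic_sol A I)"
    by (intro linear_continuous_on basic_bl Is_props(2)[OF I])
  then show "continuous_on (Hcone A c b I) (limit_map A c b Is)"
    by (rule continuous_on_cong[THEN iffD1, rotated 2]) (auto simp: limit_map_eq[OF I])
qed

end




lemma conv_distr_cont:
  fixes X :: "nat \<Rightarrow> 'a \<Rightarrow> 'b::euclidean_space" and g :: "'b \<Rightarrow> 'c::euclidean_space"
  assumes conv: "conv_distr (\<lambda>n. distr M borel (X n)) \<mu>" and Xm: "\<And>n. X n \<in> borel_measurable M"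
    and s\<mu>: "sets \<mu> = sets borel" and g: "continuous_on UNIV g"
  shows "conv_distr (\<lambda>n. distr M borel (\<lambda>\<omega>. g (X n \<omega>))) (distr \<mu> borel g)"
  unfolding conv_distr_def
proof (intro allI impI)
  fix f :: "'c \<Rightarrow> real" assume f: "continuous_on UNIV f \<and> bounded (range f)"
  have gm: "g \<in> borel_measurable borel" using g by (rule borel_measurable_continuous_onI)
  have gm': "g \<in> borel_measurable \<mu>" unfolding measurable_cong_sets[OF s\<mu> refl] by (rule gm)
  have fm: "f \<in> borel_measurable borel" using f borel_measurable_continuous_onI by blast
  have fg: "continuous_on UNIV (\<lambda>x. f (g x)) \<and> bounded (range (\<lambda>x. f (g x)))"
  proof
    show "continuous_on UNIV (\<lambda>x. f (g x))"
      using continuous_on_compose2[OF conjunct1[OF f] g] by simp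
    show "bounded (range (\<lambda>x. f (g x)))" using f by (auto intro: bounded_subset)
  qed
  have lim: "(\<lambda>n. integral\<^sup>L (distr M borel (X n)) (\<lambda>x. f (g x))) \<longlonglongrightarrow> integral\<^sup>L \<mu> (\<lambda>x. f (g x))"
    using conv[unfolded conv_distr_def, rule_format, OF fg] .
  have "integral\<^sup>L (distr M borel (\<lambda>\<omega>. g (X n \<omega>))) f = integral\<^sup>L (distr M borel (X n)) (\<lambda>x. f (g x))" for n
  proof -
    have m1: "(\<lambda>\<omega>. g (X n \<omega>)) \<in> borel_measurable M" using measurable_compose[OF Xm gm] .
    have m2: "(\<lambda>x. f (g x)) \<in> borel_measurable borel" using measurable_compose[OF gm fm] .
    show ?thesis using integral_distr[OF m1 fm] integral_distr[OF Xm m2] by simp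
  qed
  moreover have "integral\<^sup>L (distr \<mu> borel g) f = integral\<^sup>L \<mu> (\<lambda>x. f (g x))"
    using integral_distr[OF gm' fm] .
  ultimately show "(\<lambda>n. integral\<^sup>L (distr M borel (\<lambda>\<omega>. g (X n \<omega>))) f) \<longlonglongrightarrow> integral\<^sup>L (distr \<mu> borel g) f"
    using lim by simp
qed

lemma conv_distr_eq_eventually:
  fixes Y Z :: "nat \<Rightarrow> 'a \<Rightarrow> 'b::euclidean_space"
  assumes M: "prob_space M" and conv: "conv_distr (\<lambda>n. distr M borel (Y n)) \<nu>"
    and Ym: "\<And>n. Y n \<in> borel_measurable M" and Zm: "\<And>n. Z n \<in> borel_measurable M"
    and ev: "eventually (\<lambda>n. E n \<in> sets M \<and> (\<forall>\<omega>\<in>E n. Y n \<omega> = Z n \<omega>)) sequentially"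
    and E1: "(\<lambda>n. measure M (E n)) \<longlonglongrightarrow> 1"
  shows "conv_distr (\<lambda>n. distr M borel (Z n)) \<nu>"
  unfolding conv_distr_def
proof (intro allI impI)
  fix f :: "'b \<Rightarrow> real" assume f: "continuous_on UNIV f \<and> bounded (range f)"
  interpret prob_space M by (rule M)
  obtain B where B: "\<And>x. \<bar>f x\<bar> \<le> B" using f by (auto simp: bounded_iff)
  have fm: "f \<in> borel_measurable borel" using f borel_measurable_continuous_onI by blast
  have fYm: "(\<lambda>\<omega>. f (Y n \<omega>)) \<in> borel_measurable M" for n using measurable_compose[OF Ym fm] .
  have fZm: "(\<lambda>\<omega>. f (Z n \<omega>)) \<in> borel_measurable M" for n using measurable_compose[OF Zm fm] .
  have intY: "integrable M (\<lambda>\<omega>. f (Y n \<omega>))" for n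
    by (rule integrable_const_bound[where B=B]) (use B fYm in auto)
  have intZ: "integrable M (\<lambda>\<omega>. f (Z n \<omega>))" for n
    by (rule integrable_const_bound[where B=B]) (use B fZm in auto)
  have eqY: "integral\<^sup>L (distr M borel (Y n)) f = (\<integral>\<omega>. f (Y n \<omega>) \<partial>M)" for n
    using integral_distr[OF Ym fm] .
  have eqZ: "integral\<^sup>L (distr M borel (Z n)) f = (\<integral>\<omega>. f (Z n \<omega>) \<partial>M)" for n
    using integral_distr[OF Zm fm] .
  have "(\<lambda>n. (\<integral>\<omega>. f (Z n \<omega>) \<partial>M) - (\<integral>\<omega>. f (Y n \<omega>) \<partial>M)) \<longlonglongrightarrow> 0"
  proof (rule Lim_null_comparison)
    show "eventually (\<lambda>n. norm ((\<integral>\<omega>. f (Z n \<omega>) \<partial>M) - (\<integral>\<omega>. f (Y n \<omega>) \<partial>M))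
            \<le> 2 * B * (1 - measure M (E n))) sequentially"
      using ev
    proof eventually_elim
      case (elim n)
      have ind_int: "integrable M (indicator (space M - E n) :: 'a \<Rightarrow> real)"
        using elim by (intro integrable_real_indicator) (auto simp: emeasure_eq_measure)
      have "norm ((\<integral>\<omega>. f (Z n \<omega>) \<partial>M) - (\<integral>\<omega>. f (Y n \<omega>) \<partial>M))
          = norm (\<integral>\<omega>. f (Z n \<omega>) - f (Y n \<omega>) \<partial>M)"
        using intY intZ by (simp add: Bochner_Integration.integral_diff)
      also have "\<dots> \<le> (\<integral>\<omega>. norm (f (Z n \<omega>) - f (Y n \<omega>)) \<partial>M)" by (rule integral_norm_bound)
      also have "\<dots> \<le> (\<integral>\<omega>. 2 * B * indicator (space M - E n) \<omega> \<partial>M)"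
      proof (rule integral_mono)
        show "integrable M (\<lambda>\<omega>. norm (f (Z n \<omega>) - f (Y n \<omega>)))"
          using intY intZ by (intro integrable_norm Bochner_Integration.integrable_diff)
        show "integrable M (\<lambda>\<omega>. 2 * B * indicator (space M - E n) \<omega>)"
          using ind_int by (rule integrable_mult_right)
        fix \<omega> assume \<omega>: "\<omega> \<in> space M"
        show "norm (f (Z n \<omega>) - f (Y n \<omega>)) \<le> 2 * B * indicator (space M - E n) \<omega>"
        proof (cases "\<omega> \<in> E n")
          case True then show ?thesis using elim by simp
        next
          case False
          have "norm (f (Z n \<omega>) - f (Y n \<omega>)) \<le> \<bar>f (Z n \<omega>)\<bar> + \<bar>f (Y n \<omega>)\<bar>" by simp
          then show ?thesis using False \<omega> B[of "Z n \<omega>"] B[of "Y n \<omega>"] by simp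
        qed
      qed
      also have "\<dots> = 2 * B * measure M (space M - E n)"
      proof -
        have "(space M - E n) \<inter> space M = space M - E n" by auto
        then show ?thesis using elim by (simp add: integral_indicator)
      qed
      also have "\<dots> = 2 * B * (1 - measure M (E n))" using elim by (simp add: prob_compl)
      finally show ?case .
    qed
    have "(\<lambda>n. 2 * B * (1 - measure M (E n))) \<longlonglongrightarrow> 2 * B * (1 - 1)"
      by (intro tendsto_mult tendsto_diff tendsto_const E1)
    then show "(\<lambda>n. 2 * B * (1 - measure M (E n))) \<longlonglongrightarrow> 0" by simp
  qed
  moreover have "(\<lambda>n. \<integral>\<omega>. f (Y n \<omega>) \<partial>M) \<longlonglongrightarrow> integral\<^sup>L \<nu> f"
    using conv[unfolded conv_distr_def, rule_format, OF f] unfolding eqY .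
  ultimately have "(\<lambda>n. ((\<integral>\<omega>. f (Z n \<omega>) \<partial>M) - (\<integral>\<omega>. f (Y n \<omega>) \<partial>M)) + (\<integral>\<omega>. f (Y n \<omega>) \<partial>M))
      \<longlonglongrightarrow> 0 + integral\<^sup>L \<nu> f" by (rule tendsto_add)
  then show "(\<lambda>n. integral\<^sup>L (distr M borel (Z n)) f) \<longlonglongrightarrow> integral\<^sup>L \<nu> f"
    by (simp add: eqZ)
qed


lemma tight_small:
  fixes W :: "nat \<Rightarrow> 'a \<Rightarrow> 'b::euclidean_space" and r :: "nat \<Rightarrow> real"
  assumes M: "prob_space M" and \<mu>: "prob_space \<mu>" "sets \<mu> = sets borel"
    and conv: "conv_distr (\<lambda>n. distr M borel (\<lambda>\<omega>. r n *\<^sub>R W n \<omega>)) \<mu>"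
    and Wm: "\<And>n. W n \<in> borel_measurable M"
    and r: "filterlim r at_top sequentially" and \<delta>: "\<delta> > 0"
  shows "(\<lambda>n. measure M {\<omega> \<in> space M. \<delta> \<le> norm (W n \<omega>)}) \<longlonglongrightarrow> 0"
proof (rule LIMSEQ_I)
  fix \<epsilon> :: real assume \<epsilon>: "0 < \<epsilon>"
  interpret M: prob_space M by (rule M)
  interpret mu: prob_space \<mu> by (rule \<mu>(1))
  define h :: "real \<Rightarrow> 'b \<Rightarrow> real" where "h K v = min 1 (max 0 (norm v - K))" for K v
  have hc: "continuous_on UNIV (h K)" for K unfolding h_def by (intro continuous_intros)
  have hb: "bounded (range (h K))" for K unfolding bounded_iff h_def by (intro exI[of _ 1]) auto
  have hm: "h K \<in> borel_measurable borel" for K using hc by (rule borel_measurable_continuous_onI)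
  have hm\<mu>: "h K \<in> borel_measurable \<mu>" for K unfolding measurable_cong_sets[OF \<mu>(2) refl] by (rule hm)
  have "(\<lambda>k. integral\<^sup>L \<mu> (h (real k))) \<longlonglongrightarrow> integral\<^sup>L \<mu> (\<lambda>v. 0)"
  proof (rule integral_dominated_convergence[where w="\<lambda>v. 1"])
    show "(\<lambda>v. 0::real) \<in> borel_measurable \<mu>" by simp
    show "h (real k) \<in> borel_measurable \<mu>" for k by (rule hm\<mu>)
    show "integrable \<mu> (\<lambda>v. 1::real)" by simp
    show "AE v in \<mu>. (\<lambda>k. h (real k) v) \<longlonglongrightarrow> 0"
    proof (rule AE_I2)
      fix v
      have "eventually (\<lambda>k. h (real k) v = 0) sequentially"
      proof -
        obtain k0 :: nat where "norm v \<le> real k0" using real_arch_simple by blast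
        then show ?thesis unfolding eventually_sequentially h_def
          by (intro exI[of _ k0]) (auto simp: max_def min_def)
      qed
      then show "(\<lambda>k. h (real k) v) \<longlonglongrightarrow> 0" by (rule tendsto_eventually)
    qed
    show "AE v in \<mu>. norm (h (real k) v) \<le> 1" for k by (rule AE_I2) (auto simp: h_def)
  qed
  then have "(\<lambda>k. integral\<^sup>L \<mu> (h (real k))) \<longlonglongrightarrow> 0" by simp
  then obtain k where k: "norm (integral\<^sup>L \<mu> (h (real k)) - 0) < \<epsilon> / 2"
    using LIMSEQ_D[of _ 0 "\<epsilon>/2"] \<epsilon> by (meson half_gt_zero order_refl)
  define K where "K = real k"
  have Kpos: "0 \<le> K" by (simp add: K_def)
  have hK: "integral\<^sup>L \<mu> (h K) < \<epsilon> / 2" using k by (simp add: K_def)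
  have G_lim: "(\<lambda>n. integral\<^sup>L (distr M borel (\<lambda>\<omega>. r n *\<^sub>R W n \<omega>)) (h K)) \<longlonglongrightarrow> integral\<^sup>L \<mu> (h K)"
    using conv[unfolded conv_distr_def, rule_format, of "h K"] hc hb by blast
  obtain n1 where n1: "\<forall>n\<ge>n1. norm (integral\<^sup>L (distr M borel (\<lambda>\<omega>. r n *\<^sub>R W n \<omega>)) (h K) - integral\<^sup>L \<mu> (h K)) < \<epsilon> / 2"
    using LIMSEQ_D[OF G_lim, of "\<epsilon>/2"] \<epsilon> by auto
  have "eventually (\<lambda>n. (K + 1) / \<delta> \<le> r n) sequentially"
    using r by (simp add: filterlim_at_top)
  then obtain n2 where n2: "\<forall>n\<ge>n2. (K + 1) / \<delta> \<le> r n" by (auto simp: eventually_sequentially)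
  show "\<exists>no. \<forall>n\<ge>no. norm (measure M {\<omega> \<in> space M. \<delta> \<le> norm (W n \<omega>)} - 0) < \<epsilon>"
  proof (intro exI[of _ "max n1 n2"] allI impI)
    fix n assume n: "max n1 n2 \<le> n"
    have Gm: "(\<lambda>\<omega>. r n *\<^sub>R W n \<omega>) \<in> borel_measurable M" using Wm by (intro borel_measurable_scaleR) auto
    have Sm: "{\<omega> \<in> space M. \<delta> \<le> norm (W n \<omega>)} \<in> sets M"
    proof -
      have "(\<lambda>\<omega>. norm (W n \<omega>)) \<in> borel_measurable M" by (rule measurable_compose[OF Wm borel_measurable_norm])
      then show ?thesis by (intro borel_measurable_le) (auto intro: borel_measurable_const)
    qed
    have rn: "(K + 1) / \<delta> \<le> r n" using n2 n by auto
    have "0 < (K + 1) / \<delta>" using Kpos \<delta> by simp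
    then have rpos: "0 < r n" using rn by linarith
    have eqd: "integral\<^sup>L (distr M borel (\<lambda>\<omega>. r n *\<^sub>R W n \<omega>)) (h K) = (\<integral>\<omega>. h K (r n *\<^sub>R W n \<omega>) \<partial>M)"
      using integral_distr[OF Gm hm] .
    have "measure M {\<omega> \<in> space M. \<delta> \<le> norm (W n \<omega>)} = (\<integral>\<omega>. indicator {\<omega> \<in> space M. \<delta> \<le> norm (W n \<omega>)} \<omega> \<partial>M)"
      using Sm by (simp add: M.emeasure_eq_measure)
    also have "\<dots> \<le> (\<integral>\<omega>. h K (r n *\<^sub>R W n \<omega>) \<partial>M)"
    proof (rule integral_mono)
      show "integrable M (indicator {\<omega> \<in> space M. \<delta> \<le> norm (W n \<omega>)} :: 'a \<Rightarrow> real)"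
        using Sm by (intro integrable_real_indicator) (auto simp: M.emeasure_eq_measure)
      show "integrable M (\<lambda>\<omega>. h K (r n *\<^sub>R W n \<omega>))"
        by (rule M.integrable_const_bound[where B=1]) (use measurable_compose[OF Gm hm] in \<open>auto simp: h_def\<close>)
      fix \<omega> assume \<omega>: "\<omega> \<in> space M"
      show "indicator {\<omega> \<in> space M. \<delta> \<le> norm (W n \<omega>)} \<omega> \<le> h K (r n *\<^sub>R W n \<omega>)"
      proof (cases "\<delta> \<le> norm (W n \<omega>)")
        case True
        have "K + 1 = (K + 1) / \<delta> * \<delta>" using \<delta> by simp
        also have "\<dots> \<le> r n * norm (W n \<omega>)" using True rn \<delta> Kpos rpos
          by (intro mult_mono) auto
        finally have "K + 1 \<le> norm (r n *\<^sub>R W n \<omega>)" using rpos by simp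
        then show ?thesis using True \<omega> by (simp add: h_def)
      next
        case False then show ?thesis using \<omega> by (simp add: h_def)
      qed
    qed
    also have "\<dots> < \<epsilon>"
    proof -
      have "norm (integral\<^sup>L (distr M borel (\<lambda>\<omega>. r n *\<^sub>R W n \<omega>)) (h K) - integral\<^sup>L \<mu> (h K)) < \<epsilon> / 2"
        using n1 n by simp
      then have "(\<integral>\<omega>. h K (r n *\<^sub>R W n \<omega>) \<partial>M) < integral\<^sup>L \<mu> (h K) + \<epsilon> / 2"
        unfolding eqd real_norm_def abs_less_iff by linarith
      then show ?thesis using hK by linarith
    qed
    finally have "measure M {\<omega> \<in> space M. \<delta> \<le> norm (W n \<omega>)} < \<epsilon>" .
    then show "norm (measure M {\<omega> \<in> space M. \<delta> \<le> norm (W n \<omega>)} - 0) < \<epsilon>" by simp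
  qed
qed

lemma support_closed:
  fixes G :: "nat \<Rightarrow> 'a \<Rightarrow> 'b::euclidean_space"
  assumes M: "prob_space M" and \<mu>: "prob_space \<mu>" "sets \<mu> = sets borel"
    and conv: "conv_distr (\<lambda>n. distr M borel (G n)) \<mu>" and Gm: "\<And>n. G n \<in> borel_measurable M"
    and S: "closed S" "S \<noteq> {}"
    and ev: "eventually (\<lambda>n. E n \<in> sets M \<and> (\<forall>\<omega>\<in>E n. G n \<omega> \<in> S)) sequentially"
    and E1: "(\<lambda>n. measure M (E n)) \<longlonglongrightarrow> 1"
  shows "AE v in \<mu>. v \<in> S"
proof -
  interpret M: prob_space M by (rule M)
  interpret mu: prob_space \<mu> by (rule \<mu>(1))
  define f :: "'b \<Rightarrow> real" where "f v = max 0 (1 - infdist v S)" for v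
  have fc: "continuous_on UNIV f" unfolding f_def by (intro continuous_intros)
  have f01: "0 \<le> f v" "f v \<le> 1" for v using infdist_nonneg[of v S] by (auto simp: f_def)
  have fb: "bounded (range f)" unfolding bounded_iff using f01 by (intro exI[of _ 1]) auto
  have fm: "f \<in> borel_measurable borel" using fc by (rule borel_measurable_continuous_onI)
  have fm\<mu>: "f \<in> borel_measurable \<mu>" unfolding measurable_cong_sets[OF \<mu>(2) refl] by (rule fm)
  have fint: "integrable \<mu> f" by (rule mu.integrable_const_bound[where B=1]) (use f01 fm\<mu> in auto)
  have lim: "(\<lambda>n. integral\<^sup>L (distr M borel (G n)) f) \<longlonglongrightarrow> integral\<^sup>L \<mu> f"
    using conv[unfolded conv_distr_def, rule_format, of f] fc fb by blast
  have "eventually (\<lambda>n. measure M (E n) \<le> integral\<^sup>L (distr M borel (G n)) f) sequentially"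
    using ev
  proof eventually_elim
    case (elim n)
    have "measure M (E n) = (\<integral>\<omega>. indicator (E n) \<omega> \<partial>M)" using elim by (simp add: M.emeasure_eq_measure)
    also have "\<dots> \<le> (\<integral>\<omega>. f (G n \<omega>) \<partial>M)"
    proof (rule integral_mono)
      show "integrable M (indicator (E n) :: 'a \<Rightarrow> real)"
        using elim by (intro integrable_real_indicator) (auto simp: M.emeasure_eq_measure)
      show "integrable M (\<lambda>\<omega>. f (G n \<omega>))"
        by (rule M.integrable_const_bound[where B=1]) (use f01 measurable_compose[OF Gm fm] in auto)
      fix \<omega> assume \<omega>: "\<omega> \<in> space M"
      show "indicator (E n) \<omega> \<le> f (G n \<omega>)"
      proof (cases "\<omega> \<in> E n")
        case True
        then have "G n \<omega> \<in> S" using elim by blast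
        then have "infdist (G n \<omega>) S = 0" by (rule infdist_zero)
        then show ?thesis using True by (simp add: f_def)
      next
        case False then show ?thesis using f01 by simp
      qed
    qed
    also have "\<dots> = integral\<^sup>L (distr M borel (G n)) f" using integral_distr[OF Gm fm] by simp
    finally show ?case .
  qed
  then have "1 \<le> integral\<^sup>L \<mu> f" using tendsto_le[OF trivial_limit_sequentially lim E1] by blast
  moreover have "integral\<^sup>L \<mu> f \<le> 1"
  proof -
    have "integral\<^sup>L \<mu> f \<le> integral\<^sup>L \<mu> (\<lambda>v. 1::real)" using fint f01 by (intro integral_mono) auto
    then show ?thesis using mu.prob_space by simp
  qed
  ultimately have "integral\<^sup>L \<mu> (\<lambda>v. 1 - f v) = 0" using fint mu.prob_space by (simp add: Bochner_Integration.integral_diff)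
  then have "AE v in \<mu>. 1 - f v = 0"
    using integral_nonneg_eq_0_iff_AE[of \<mu> "\<lambda>v. 1 - f v"] fint f01 by simp
  then show ?thesis
  proof (rule AE_mp[OF _ AE_I2], intro impI)
    fix v assume "1 - f v = 0"
    then have "infdist v S \<le> 0" by (simp add: f_def max_def split: if_splits)
    then have "infdist v S = 0" using infdist_nonneg[of v S] by simp
    then have "v \<in> closure S" using in_closure_iff_infdist_zero[OF S(2)] by simp
    then show "v \<in> S" using S(1) by simp
  qed
qed




context lpsetup begin

lemma Hcone_scale:
  assumes I: "I \<in> set Is" and w: "w \<in> Hcone A c b I" and t: "0 \<le> t"
  shows "t *\<^sub>R w \<in> Hcone A c b I"
  using w t basic_add(2)[OF Is_props(2)[OF I], of t w] by (auto simp: Hcone_def)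

lemma Hcone_borel: "I \<in> set Is \<Longrightarrow> Hcone A c b I \<in> sets borel"
  by (rule borel_closed[OF closed_Hcone])

lemma basic_borel: "I \<in> set Is \<Longrightarrow> basic_sol A I \<in> borel_measurable borel"
  by (intro borel_measurable_continuous_onI linear_continuous_on basic_bl Is_props(2))

lemma limit_map_meas: "limit_map A c b Is \<in> borel_measurable borel"
proof -
  have "(\<lambda>v. \<Sum>k<length Is. indicator (Hcone A c b (Is ! k) - (\<Union>j<k. Hcone A c b (Is ! j))) v
      *\<^sub>R basic_sol A (Is ! k) v) \<in> borel_measurable borel"
  proof (intro borel_measurable_sum borel_measurable_scaleR borel_measurable_indicator)
    fix k assume k: "k \<in> {..<length Is}"
    then have k': "Is ! k \<in> set Is" by simp
    have "Hcone A c b (Is ! j) \<in> sets borel" if "j < k" for j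
      using that k by (intro Hcone_borel) simp
    then show "Hcone A c b (Is ! k) - (\<Union>j<k. Hcone A c b (Is ! j)) \<in> sets borel"
      using Hcone_borel[OF k'] by auto
    show "basic_sol A (Is ! k) \<in> borel_measurable borel" by (rule basic_borel[OF k'])
  qed
  then show ?thesis unfolding limit_map_def[abs_def] by simp
qed

lemma limit_map_simple_meas: "limit_map_simple A c b Is \<in> borel_measurable borel"
proof -
  have "(\<lambda>v. \<Sum>k<length Is. indicator (Hcone A c b (Is ! k)) v
      *\<^sub>R basic_sol A (Is ! k) v) \<in> borel_measurable borel"
  proof (intro borel_measurable_sum borel_measurable_scaleR borel_measurable_indicator)
    fix k assume k: "k \<in> {..<length Is}"
    then have k': "Is ! k \<in> set Is" by simp
    show "Hcone A c b (Is ! k) \<in> sets borel" by (rule Hcone_borel[OF k'])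
    show "basic_sol A (Is ! k) \<in> borel_measurable borel" by (rule basic_borel[OF k'])
  qed
  then show ?thesis unfolding limit_map_simple_def[abs_def] by simp
qed

lemma zero_in: "\<exists>I\<in>set Is. 0 \<in> Hcone A c b I"
proof -
  obtain I where I: "dual_feasible_basis A c I" "\<forall>i. 0 \<le> basic_sol A I b $ i"
    using opt_basis[OF surj xst_opt] by blast
  then have II: "I \<in> set Is" using enum by auto
  have "basic_sol A I 0 = 0" using basic_add(2)[OF Is_props(2)[OF II], of 0 0] by simp
  then show ?thesis using II by (intro bexI[of _ I]) (auto simp: Hcone_def)
qed

definition "Nset = (\<Union>p\<in>{p. fst p < snd p \<and> snd p < length Is}.
   {v. (dual_sol A c (Is ! fst p) - dual_sol A c (Is ! snd p)) \<bullet> v = 0})"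

lemma simple_eq:
  assumes v: "v \<notin> Nset"
  shows "limit_map_simple A c b Is v = limit_map A c b Is v"
  unfolding limit_map_simple_def limit_map_def
proof (intro sum.cong refl)
  fix k assume k: "k \<in> {..<length Is}"
  have "v \<notin> Hcone A c b (Is ! j)" if j: "j < k" and vk: "v \<in> Hcone A c b (Is ! k)" for j
  proof
    assume vj: "v \<in> Hcone A c b (Is ! j)"
    have jI: "Is ! j \<in> set Is" and kI: "Is ! k \<in> set Is" using j k by auto
    have "basic_sol A (Is ! j) v = basic_sol A (Is ! k) v" by (rule consist[OF jI kI vj vk])
    then have "dual_sol A c (Is ! j) \<bullet> v = dual_sol A c (Is ! k) \<bullet> v"
      using dual_basic[OF Is_props(2)[OF jI], of c v] dual_basic[OF Is_props(2)[OF kI], of c v] by simp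
    then have "(dual_sol A c (Is ! j) - dual_sol A c (Is ! k)) \<bullet> v = 0" by (simp add: inner_diff_left)
    then have "v \<in> Nset" using j k unfolding Nset_def by (intro UN_I[of "(j,k)"]) auto
    then show False using v by blast
  qed
  then have "indicator (Hcone A c b (Is ! k)) v = (indicator (Hcone A c b (Is ! k) - (\<Union>j<k. Hcone A c b (Is ! j))) v :: real)"
    by (auto simp: indicator_def)
  then show "indicator (Hcone A c b (Is ! k)) v *\<^sub>R basic_sol A (Is ! k) v =
    indicator (Hcone A c b (Is ! k) - (\<Union>j<k. Hcone A c b (Is ! j))) v *\<^sub>R basic_sol A (Is ! k) v"
    by simp
qed

lemma Nset_null: "Nset \<in> null_sets lborel"
  unfolding Nset_def
proof (rule null_sets_UN')
  show "countable {p. fst p < snd p \<and> snd p < length Is}"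
    by (rule countable_finite) (rule finite_subset[of _ "{..<length Is} \<times> {..<length Is}"], auto)
next
  fix p assume p: "p \<in> {p. fst p < snd p \<and> snd p < length Is}"
  define a where "a = dual_sol A c (Is ! fst p) - dual_sol A c (Is ! snd p)"
  have "map (dual_sol A c) Is ! fst p \<noteq> map (dual_sol A c) Is ! snd p"
    using A3 p by (simp add: distinct_conv_nth)
  then have "a \<noteq> 0" using p by (simp add: a_def)
  then have "negligible {v. a \<bullet> v = 0}" using negligible_hyperplane[of a 0] by simp
  then have "{v. a \<bullet> v = 0} \<in> null_sets lebesgue" by (simp add: negligible_iff_null_sets)
  moreover have "{v. a \<bullet> v = 0} \<in> sets lborel"
    by (simp add: borel_closed closed_hyperplane)
  ultimately show "{v. (dual_sol A c (Is ! fst p) - dual_sol A c (Is ! snd p)) \<bullet> v = 0} \<in> null_sets lborel"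
    using null_sets_completion_iff[of "{v. a \<bullet> v = 0}" lborel] by (simp add: a_def)
qed

end

lemma conv_distr_cong:
  fixes \<mu>s :: "nat \<Rightarrow> 'a::real_normed_vector measure"
  assumes "conv_distr \<mu>s \<nu>"
    and "\<And>f::'a \<Rightarrow> real. continuous_on UNIV f \<Longrightarrow> bounded (range f) \<Longrightarrow> integral\<^sup>L \<nu> f = integral\<^sup>L \<nu>' f"
  shows "conv_distr \<mu>s \<nu>'"
  unfolding conv_distr_def
proof (intro allI impI)
  fix f :: "'a \<Rightarrow> real" assume f: "continuous_on UNIV f \<and> bounded (range f)"
  have "(\<lambda>n. integral\<^sup>L (\<mu>s n) f) \<longlonglongrightarrow> integral\<^sup>L \<nu> f"
    using assms(1)[unfolded conv_distr_def, rule_format, OF f] .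
  then show "(\<lambda>n. integral\<^sup>L (\<mu>s n) f) \<longlonglongrightarrow> integral\<^sup>L \<nu>' f" using assms(2) f by simp
qed


theorem theorem3p2:
  fixes A :: "real^'d^('m::{finite,linorder})"
    and b :: "real^('m::{finite,linorder})" and c :: "real^'d"
    and Is :: "'d set list"
    and M :: "'a measure"
    and r :: "nat \<Rightarrow> real"
    and m0 :: nat
    and bs :: "nat \<Rightarrow> 'a \<Rightarrow> real^('m::{finite,linorder})"
    and xs :: "nat \<Rightarrow> 'a \<Rightarrow> real^'d"
    and \<mu> :: "(real^('m::{finite,linorder})) measure"
  assumes full_rank: "rank A = CARD(('m::{finite,linorder}))"
    and m_le_d: "CARD(('m::{finite,linorder})) \<le> CARD('d)"
    and enum: "distinct Is"
      "set Is = {I. dual_feasible_basis A c I \<and> (\<forall>i. 0 \<le> basic_sol A I b $ i)}"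
    and A2: "\<exists>!x. lp_optimal A c b x"
    and A3: "distinct (map (dual_sol A c) Is)"
    and M: "prob_space M"
    and r: "filterlim r at_top sequentially"
    and m0: "1 \<le> m0" "m0 \<le> CARD(('m::{finite,linorder}))"
    and bs_meas: "\<And>n. bs n \<in> borel_measurable M"
    and bs_last: "\<And>n \<omega> i. i \<notin> first_coords m0 \<Longrightarrow> bs n \<omega> $ i = b $ i"
    and G_law: "prob_space \<mu>" "sets \<mu> = sets borel"
    and B1_conv: "conv_distr (\<lambda>n. distr M borel (\<lambda>\<omega>. r n *\<^sub>R (bs n \<omega> - b))) \<mu>"
    and B1_zero: "AE v in \<mu>. \<forall>i. i \<notin> first_coords m0 \<longrightarrow> v $ i = 0"
    and B1_ac: "absolutely_continuous (PiM (first_coords m0) (\<lambda>_. lborel))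
                  (distr \<mu> (PiM (first_coords m0) (\<lambda>_. lborel))
                     (\<lambda>v. restrict (\<lambda>i. v $ i) (first_coords m0)))"
    and B2: "(\<lambda>n. measure M {\<omega> \<in> space M. \<exists>x. lp_optimal A c (bs n \<omega>) x}) \<longlonglongrightarrow> 1"
    and xs_meas: "\<And>n. xs n \<in> borel_measurable M"
    and xs_opt: "\<And>n \<omega>. \<omega> \<in> space M \<Longrightarrow> (\<exists>x. lp_optimal A c (bs n \<omega>) x) \<Longrightarrow>
                   lp_optimal A c (bs n \<omega>) (xs n \<omega>)"
  shows "conv_distr (\<lambda>n. distr M borel (\<lambda>\<omega>. r n *\<^sub>R (xs n \<omega> - lp_xstar A c b)))
           (distr \<mu> borel (limit_map A c b Is))
         \<and> (absolutely_continuous lborel \<mu> \<longrightarrow>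
            conv_distr (\<lambda>n. distr M borel (\<lambda>\<omega>. r n *\<^sub>R (xs n \<omega> - lp_xstar A c b)))
              (distr \<mu> borel (limit_map_simple A c b Is)))"
proof -
  have surj: "surj ((*v) A)" using full_rank by (simp add: full_rank_surjective)
  interpret L: lpsetup A b c Is using surj enum A2 A3 by unfold_locales auto
  interpret M: prob_space M by (rule M)
  interpret mu: prob_space \<mu> by (rule G_law(1))
  have xst: "L.xst = lp_xstar A c b" by (simp add: L.xst_def)
  define S where "S = (\<Union>I\<in>set Is. Hcone A c b I)"
  have Sclosed: "closed S" unfolding S_def using L.closed_Hcone by (intro closed_UN) auto
  have Sne: "S \<noteq> {}" using L.zero_in unfolding S_def by blast
  have LMc: "continuous_on S (limit_map A c b Is)" unfolding S_def by (rule L.limit_map_cont)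
  have cl: "closedin (top_of_set UNIV) S" unfolding subtopology_UNIV closed_closedin[symmetric] by (rule Sclosed)
  obtain g where g: "continuous_on UNIV g" "\<And>v. v \<in> S \<Longrightarrow> g v = limit_map A c b Is v"
  proof (rule Dugundji[OF convex_UNIV UNIV_not_empty cl LMc subset_UNIV])
    fix g assume "continuous_on UNIV g" "g ` UNIV \<subseteq> UNIV" "\<And>x. x \<in> S \<Longrightarrow> g x = limit_map A c b Is x"
    then show thesis using that by blast
  qed
  have gm: "g \<in> borel_measurable borel" using g(1) by (rule borel_measurable_continuous_onI)
  obtain \<delta> where \<delta>: "\<delta> > 0" "\<forall>w. norm w < \<delta> \<longrightarrow> (\<forall>y. lp_optimal A c (b + w) y \<longrightarrow>
      (\<exists>I\<in>set Is. w \<in> Hcone A c b I \<and> y = L.xst + basic_sol A I w))"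
    using L.local_sol by blast
  define G where "G n \<omega> = r n *\<^sub>R (bs n \<omega> - b)" for n \<omega>
  define D where "D n \<omega> = r n *\<^sub>R (xs n \<omega> - lp_xstar A c b)" for n \<omega>
  define \<Omega> where "\<Omega> n = {\<omega> \<in> space M. \<exists>x. lp_optimal A c (bs n \<omega>) x}" for n
  define T where "T n = {\<omega> \<in> space M. \<delta> \<le> norm (bs n \<omega> - b)}" for n
  define E where "E n = \<Omega> n - T n" for n
  have Wm: "(\<lambda>\<omega>. bs n \<omega> - b) \<in> borel_measurable M" for n
    using bs_meas[of n] by (intro borel_measurable_diff) auto
  have Gm: "G n \<in> borel_measurable M" for n
    unfolding G_def using Wm[of n] by (intro borel_measurable_scaleR) auto
  have Dm: "D n \<in> borel_measurable M" for n
    unfolding D_def using xs_meas[of n] by (intro borel_measurable_scaleR borel_measurable_diff) auto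
  have Tm: "T n \<in> sets M" for n
  proof -
    have "(\<lambda>\<omega>. norm (bs n \<omega> - b)) \<in> borel_measurable M" by (rule measurable_compose[OF Wm borel_measurable_norm])
    then show ?thesis unfolding T_def by (intro borel_measurable_le) auto
  qed
  have B2': "(\<lambda>n. measure M (\<Omega> n)) \<longlonglongrightarrow> 1" using B2 by (simp add: \<Omega>_def)
  have "eventually (\<lambda>n. 1/2 < measure M (\<Omega> n)) sequentially"
    by (rule order_tendstoD(1)[OF B2']) simp
  then have \<Omega>ev: "eventually (\<lambda>n. \<Omega> n \<in> sets M) sequentially"
    by (rule eventually_mono) (use measure_notin_sets in force)
  have Tlim: "(\<lambda>n. measure M (T n)) \<longlonglongrightarrow> 0"
    unfolding T_def using tight_small[where W="\<lambda>n \<omega>. bs n \<omega> - b", OF M G_law B1_conv Wm r \<delta>(1)] .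
  have E1: "(\<lambda>n. measure M (E n)) \<longlonglongrightarrow> 1"
  proof (rule tendsto_sandwich)
    show "eventually (\<lambda>n. measure M (\<Omega> n) - measure M (T n) \<le> measure M (E n)) sequentially"
      using \<Omega>ev
    proof eventually_elim
      case (elim n)
      have "\<Omega> n \<subseteq> E n \<union> T n" by (auto simp: E_def)
      then have "measure M (\<Omega> n) \<le> measure M (E n \<union> T n)"
        using elim Tm by (intro M.finite_measure_mono) (auto simp: E_def)
      also have "\<dots> \<le> measure M (E n) + measure M (T n)"
        using elim Tm by (intro measure_subadditive) (auto simp: E_def M.emeasure_eq_measure)
      finally show ?case by simp
    qed
    show "eventually (\<lambda>n. measure M (E n) \<le> 1) sequentially" by simp
    have "(\<lambda>n. measure M (\<Omega> n) - measure M (T n)) \<longlonglongrightarrow> 1 - 0" by (intro tendsto_diff B2' Tlim)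
    then show "(\<lambda>n. measure M (\<Omega> n) - measure M (T n)) \<longlonglongrightarrow> 1" by simp
    show "(\<lambda>n. 1::real) \<longlonglongrightarrow> 1" by simp
  qed
  have rpos: "eventually (\<lambda>n. 0 < r n) sequentially" using r by (simp add: filterlim_at_top_dense)
  have key: "eventually (\<lambda>n. E n \<in> sets M \<and> (\<forall>\<omega>\<in>E n. G n \<omega> \<in> S \<and> g (G n \<omega>) = D n \<omega>)) sequentially"
    using \<Omega>ev rpos
  proof eventually_elim
    case (elim n)
    have "E n \<in> sets M" using elim Tm by (auto simp: E_def)
    moreover have "G n \<omega> \<in> S \<and> g (G n \<omega>) = D n \<omega>" if \<omega>: "\<omega> \<in> E n" for \<omega>
    proof -
      define w where "w = bs n \<omega> - b"
      have \<omega>s: "\<omega> \<in> space M" "\<exists>x. lp_optimal A c (bs n \<omega>) x" "norm w < \<delta>"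
        using \<omega> by (auto simp: E_def \<Omega>_def T_def w_def)
      have "lp_optimal A c (b + w) (xs n \<omega>)" using xs_opt[OF \<omega>s(1,2)] by (simp add: w_def)
      then obtain I where I: "I \<in> set Is" "w \<in> Hcone A c b I" "xs n \<omega> = L.xst + basic_sol A I w"
        using \<delta>(2) \<omega>s(3) by blast
      have GI: "G n \<omega> \<in> Hcone A c b I"
        unfolding G_def w_def[symmetric] using L.Hcone_scale[OF I(1,2)] elim(2) by simp
      have "D n \<omega> = r n *\<^sub>R basic_sol A I w" unfolding D_def using I(3) xst by simp
      also have "\<dots> = basic_sol A I (G n \<omega>)"
        unfolding G_def w_def[symmetric] using L.basic_add(2)[OF L.Is_props(2)[OF I(1)]] by simp
      also have "\<dots> = limit_map A c b Is (G n \<omega>)" using L.limit_map_eq[OF I(1) GI] by simp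
      finally have "D n \<omega> = limit_map A c b Is (G n \<omega>)" .
      moreover have "G n \<omega> \<in> S" using GI I(1) by (auto simp: S_def)
      ultimately show ?thesis using g(2) by simp
    qed
    ultimately show ?case by blast
  qed
  have convG: "conv_distr (\<lambda>n. distr M borel (G n)) \<mu>" using B1_conv unfolding G_def .
  have conv1: "conv_distr (\<lambda>n. distr M borel (\<lambda>\<omega>. g (G n \<omega>))) (distr \<mu> borel g)"
    by (rule conv_distr_cont[OF convG Gm G_law(2) g(1)])
  have key1: "eventually (\<lambda>n. E n \<in> sets M \<and> (\<forall>\<omega>\<in>E n. g (G n \<omega>) = D n \<omega>)) sequentially"
    using key by (rule eventually_mono) blast
  have key2: "eventually (\<lambda>n. E n \<in> sets M \<and> (\<forall>\<omega>\<in>E n. G n \<omega> \<in> S)) sequentially"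
    using key by (rule eventually_mono) blast
  have conv2: "conv_distr (\<lambda>n. distr M borel (D n)) (distr \<mu> borel g)"
    by (rule conv_distr_eq_eventually[OF M conv1 measurable_compose[OF Gm gm] Dm key1 E1])
  have AES: "AE v in \<mu>. v \<in> S"
    by (rule support_closed[OF M G_law convG Gm Sclosed Sne key2 E1])
  have meas\<mu>: "h \<in> borel_measurable \<mu>" if "h \<in> borel_measurable borel" for h :: "real^('m::{finite,linorder}) \<Rightarrow> real^'d"
    using that unfolding measurable_cong_sets[OF G_law(2) refl] .
  have intcong: "integral\<^sup>L (distr \<mu> borel g) f = integral\<^sup>L (distr \<mu> borel h) f"
    if h: "h \<in> borel_measurable borel" and ae: "AE v in \<mu>. g v = h v" and f: "continuous_on UNIV f"
    for h :: "real^('m::{finite,linorder}) \<Rightarrow> real^'d" and f :: "real^'d \<Rightarrow> real"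
  proof -
    have fm: "f \<in> borel_measurable borel" using f by (rule borel_measurable_continuous_onI)
    have "integral\<^sup>L (distr \<mu> borel g) f = (\<integral>v. f (g v) \<partial>\<mu>)" using integral_distr[OF meas\<mu>[OF gm] fm] .
    also have "\<dots> = (\<integral>v. f (h v) \<partial>\<mu>)"
      using ae by (intro integral_cong_AE measurable_compose[OF meas\<mu>[OF gm] fm] measurable_compose[OF meas\<mu>[OF h] fm])
        (auto elim: AE_mp)
    also have "\<dots> = integral\<^sup>L (distr \<mu> borel h) f" using integral_distr[OF meas\<mu>[OF h] fm] by simp
    finally show ?thesis .
  qed
  have AE1: "AE v in \<mu>. g v = limit_map A c b Is v" using AES by (rule AE_mp) (auto intro!: AE_I2 g(2))
  have part1: "conv_distr (\<lambda>n. distr M borel (D n)) (distr \<mu> borel (limit_map A c b Is))"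
    using conv2 by (rule conv_distr_cong) (rule intcong[OF L.limit_map_meas AE1])
  have part2: "conv_distr (\<lambda>n. distr M borel (D n)) (distr \<mu> borel (limit_map_simple A c b Is))"
    if ac: "absolutely_continuous lborel \<mu>"
  proof -
    have "L.Nset \<in> null_sets \<mu>" using L.Nset_null ac by (auto simp: absolutely_continuous_def)
    then have "AE v in \<mu>. v \<notin> L.Nset" by (rule AE_not_in)
    then have AE2: "AE v in \<mu>. g v = limit_map_simple A c b Is v"
      using AE1 by (rule AE_mp[OF _ AE_mp]) (auto intro!: AE_I2 simp: L.simple_eq)
    show ?thesis using conv2 by (rule conv_distr_cong) (rule intcong[OF L.limit_map_simple_meas AE2])
  qed
  show ?thesis using part1 part2 unfolding D_def by blast
qed


end
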